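(* In the construction described in the context, for every $k\in\mathbb{N}$ the space $(P_k,\rho_k)$ is compact and $2$-quasiconvex. Moreover, $(P_\infty,\rho_\infty)$ is compact and $2$-quasiconvex, and the sets $i_k(P_k)$ converge to $P_\infty$ in the Hausdorff–Pompeiu distance of $(P_\infty,\rho_\infty)$.
   Context: Construction. Let $(e_n)$ be the canonical basis of $\ell^1(\mathbb{N})$; $\alpha(t)=t$ on $[0,\frac12]$, $\alpha(t)=1-t$ on $[\frac12,1]$; $S_n=\{te_1+\alpha(t)e_{n+1}:t\in[0,1]\}$; $x_n=(\frac12-\frac1{2^n})e_1$, $x_\infty=\frac12e_1$; $Y=\bigcup_{n\ge1}(2^{-(n+1)}S_n+x_n)\cup\{x_\infty\}$ with the $\ell^1$ metric $\theta$. $Y$ is the image of an arc-length parametrized injective curve $\gamma:[0,1]\to Y$ with $\gamma(0)=0$, $\gamma(1)=x_\infty$. For $r>0$ let $\theta_r(s,t)=r\,\theta(\gamma(s/r),\gamma(t/r))$ on $[0,r]$. Set $P_1=[0,1]$, $\rho_1=\theta_1$, $L_1=\{1\}$. Given $(P_k,\rho_k)$ with $P_k\subset[0,1]^k$ and $L_k\subset P_k$, let $\pi_k$ denote the $k$-th coordinate, choose a countable dense subset $Q_k=\{q_n:n\in\mathbb{N}\}$ (distinct $q_n$) of $P_k\setminus L_k$ with $\pi_k$ injective on $Q_k$ and $0\notin\pi_k(Q_k)$, set $r_n=2^{-(n+k)}$, $d_n=\theta_{r_n}$, and let $P_{k+1}=\{(x,0):x\in P_k\setminus Q_k\}\cup\{(q_n,y):n\in\mathbb{N},y\in[0,r_n]\}\subset[0,1]^{k+1}$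 with metric $\rho_{k+1}((x_1,y_1),(x_2,y_2))$ equal to $d_n(y_1,y_2)$ if $x_1=x_2=q_n$; $d_n(y_1,0)+\rho_k(x_1,x_2)+d_m(0,y_2)$ if $x_1=q_n,x_2=q_m$, $n\ne m$; $d_n(y_1,0)+\rho_k(x_1,x_2)$ if $x_1=q_n$, $x_2\notin Q_k$ (and symmetrically); $\rho_k(x_1,x_2)$ if $x_1,x_2\notin Q_k$. Let $L_{k+1}=(L_k\times\{0\})\cup\{(q_n,r_n):n\in\mathbb{N}\}$. Let $i_k:P_k\to[0,1]^{\mathbb{N}}$, $i_k(x)=(x_1,\dots,x_k,0,0,\dots)$; $\mathcal P_\infty=\bigcup_k i_k(P_k)$ with the metric $\rho_\infty(x,y)=\rho_k(i_k^{-1}x,i_k^{-1}y)$ for $x,y\in i_k(P_k)$; $(P_\infty,\rho_\infty)$ is the completion of $(\mathcal P_\infty,\rho_\infty)$. A metric space is $C$-quasiconvex if its intrinsic distance (infimum of lengths of continuous curves joining two points) is at most $C$ times its metric. Hausdorff–Pompeiu distance: $d_H(A,B)=\max\{\sup_{a\in A}\mathrm{dist}(a,B),\sup_{b\in B}\mathrm{dist}(b,A)\}$. *)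

theory Defs
  imports "HOL-Analysis.Analysis"
begin

text \<open>Points of l^1(N) are modelled as functions nat => real; the canonical basis
  vector e_n (n >= 1) is the indicator of the index n.\<close>

definition e :: "nat \<Rightarrow> nat \<Rightarrow> real" where
  "e n = (\<lambda>i. if i = n then 1 else 0)"

definition theta :: "(nat \<Rightarrow> real) \<Rightarrow> (nat \<Rightarrow> real) \<Rightarrow> real" where
  "theta x y = (\<Sum>i. \<bar>x i - y i\<bar>)"

definition alpha :: "real \<Rightarrow> real" where
  "alpha t = (if t \<le> 1/2 then t else 1 - t)"

definition S :: "nat \<Rightarrow> (nat \<Rightarrow> real) set" where
  "S n = {(\<lambda>i. t * e 1 i + alpha t * e (n+1) i) | t. 0 \<le> t \<and> t \<le> 1}"

definition xpt :: "nat \<Rightarrow> nat \<Rightarrow> real" where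
  "xpt n = (\<lambda>i. (1/2 - 1/2^n) * e 1 i)"

definition xinf :: "nat \<Rightarrow> real" where
  "xinf = (\<lambda>i. (1/2) * e 1 i)"

definition Y :: "(nat \<Rightarrow> real) set" where
  "Y = (\<Union>n\<in>{1..}. (\<lambda>p. (\<lambda>i. (1/2)^(n+1) * p i + xpt n i)) ` S n) \<union> {xinf}"

text \<open>The arc-length parametrisation gamma : [0,1] -> Y (written out explicitly):
  on [1 - 2^(1-n), 1 - 2^(-n)] it runs through 2^(-(n+1)) S_n + x_n with speed 1,
  and gamma 1 = x_inf.\<close>

definition gamma :: "real \<Rightarrow> nat \<Rightarrow> real" where
  "gamma s = (if 1 \<le> s then xinf else
     (let n = (LEAST n::nat. 1 \<le> n \<and> s < 1 - 1/2^n);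
          t = 2^n * (s - (1 - 1/2^(n-1)))
      in (\<lambda>i. xpt n i + (1/2)^(n+1) * (t * e 1 i + alpha t * e (n+1) i))))"

definition theta_r :: "real \<Rightarrow> real \<Rightarrow> real \<Rightarrow> real" where
  "theta_r r s t = r * theta (gamma (s/r)) (gamma (t/r))"

text \<open>Points of P_k are real lists of length k.  The choice at stage K >= 1 is an
  enumeration Q K : nat => real list of Q_K; here the enumeration is 0-based, so
  Q K n is the paper's q_(n+1) and its radius is r_(n+1) = 2^(-(n+1+K)).\<close>

definition rad :: "nat \<Rightarrow> nat \<Rightarrow> real" where
  "rad K n = (1/2)^(n + 1 + K)"

fun Pk :: "(nat \<Rightarrow> nat \<Rightarrow> real list) \<Rightarrow> nat \<Rightarrow> real list set" where
  "Pk Q 0 = {}"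
| "Pk Q (Suc 0) = {[t] | t. 0 \<le> t \<and> t \<le> 1}"
| "Pk Q (Suc (Suc k)) =
     {x @ [0] | x. x \<in> Pk Q (Suc k) - range (Q (Suc k))}
     \<union> {Q (Suc k) n @ [y] | n y. 0 \<le> y \<and> y \<le> rad (Suc k) n}"

fun Lk :: "(nat \<Rightarrow> nat \<Rightarrow> real list) \<Rightarrow> nat \<Rightarrow> real list set" where
  "Lk Q 0 = {}"
| "Lk Q (Suc 0) = {[1]}"
| "Lk Q (Suc (Suc k)) =
     {x @ [0] | x. x \<in> Lk Q (Suc k)} \<union> {Q (Suc k) n @ [rad (Suc k) n] | n. True}"

fun rhok :: "(nat \<Rightarrow> nat \<Rightarrow> real list) \<Rightarrow> nat \<Rightarrow> real list \<Rightarrow> real list \<Rightarrow> real" where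
  "rhok Q 0 a b = 0"
| "rhok Q (Suc 0) a b = theta_r 1 (hd a) (hd b)"
| "rhok Q (Suc (Suc k)) a b =
     (let x1 = butlast a; y1 = last a; x2 = butlast b; y2 = last b;
          QK = range (Q (Suc k));
          d = (\<lambda>x. theta_r (rad (Suc k) (inv (Q (Suc k)) x)))
      in if x1 \<in> QK \<and> x2 \<in> QK then
           (if x1 = x2 then d x1 y1 y2
            else d x1 y1 0 + rhok Q (Suc k) x1 x2 + d x2 0 y2)
         else if x1 \<in> QK then d x1 y1 0 + rhok Q (Suc k) x1 x2
         else if x2 \<in> QK then rhok Q (Suc k) x1 x2 + d x2 0 y2
         else rhok Q (Suc k) x1 x2)"

definition admissible :: "(nat \<Rightarrow> nat \<Rightarrow> real list) \<Rightarrow> bool" where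
  "admissible Q \<longleftrightarrow> (\<forall>K\<ge>1.
      inj (Q K) \<and>
      range (Q K) \<subseteq> Pk Q K - Lk Q K \<and>
      (\<forall>x\<in>Pk Q K - Lk Q K. \<forall>\<epsilon>>0. \<exists>n. rhok Q K x (Q K n) < \<epsilon>) \<and>
      inj (\<lambda>n. last (Q K n)) \<and>
      (\<forall>n. last (Q K n) \<noteq> 0))"

definition emb :: "real list \<Rightarrow> nat \<Rightarrow> real" where
  "emb x = (\<lambda>j. if j < length x then x ! j else 0)"

definition Pcal :: "(nat \<Rightarrow> nat \<Rightarrow> real list) \<Rightarrow> (nat \<Rightarrow> real) set" where
  "Pcal Q = (\<Union>k\<in>{1..}. emb ` Pk Q k)"

definition rho_inf :: "(nat \<Rightarrow> nat \<Rightarrow> real list) \<Rightarrow> (nat \<Rightarrow> real) \<Rightarrow> (nat \<Rightarrow> real) \<Rightarrow> real" where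
  "rho_inf Q x y =
     (let k = (LEAST k. 1 \<le> k \<and> x \<in> emb ` Pk Q k \<and> y \<in> emb ` Pk Q k)
      in rhok Q k (map x [0..<k]) (map y [0..<k]))"

definition mcurve :: "'a set \<Rightarrow> ('a \<Rightarrow> 'a \<Rightarrow> real) \<Rightarrow> (real \<Rightarrow> 'a) \<Rightarrow> bool" where
  "mcurve M d g \<longleftrightarrow> (\<forall>t\<in>{0..1}. g t \<in> M) \<and>
     (\<forall>t\<in>{0..1}. \<forall>\<epsilon>>0. \<exists>\<delta>>0. \<forall>s\<in>{0..1}. \<bar>s - t\<bar> < \<delta> \<longrightarrow> d (g s) (g t) < \<epsilon>)"

definition curve_length :: "('a \<Rightarrow> 'a \<Rightarrow> real) \<Rightarrow> (real \<Rightarrow> 'a) \<Rightarrow> ereal" where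
  "curve_length d g =
     (SUP p \<in> {(n, t). (\<forall>i\<le>n. 0 \<le> t i \<and> t i \<le> 1) \<and> (\<forall>i<n. t i \<le> t (Suc i))}.
        ereal (\<Sum>i<fst p. d (g (snd p i)) (g (snd p (Suc i)))))"

definition intrinsic_dist :: "'a set \<Rightarrow> ('a \<Rightarrow> 'a \<Rightarrow> real) \<Rightarrow> 'a \<Rightarrow> 'a \<Rightarrow> ereal" where
  "intrinsic_dist M d x y =
     (INF g \<in> {g. mcurve M d g \<and> g 0 = x \<and> g 1 = y}. curve_length d g)"

definition quasiconvex :: "real \<Rightarrow> 'a set \<Rightarrow> ('a \<Rightarrow> 'a \<Rightarrow> real) \<Rightarrow> bool" where
  "quasiconvex C M d \<longleftrightarrow> (\<forall>x\<in>M. \<forall>y\<in>M. intrinsic_dist M d x y \<le> ereal (C * d x y))"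

definition hausdorff_pompeiu :: "'a::metric_space set \<Rightarrow> 'a set \<Rightarrow> real" where
  "hausdorff_pompeiu A B = max (SUP a\<in>A. infdist a B) (SUP b\<in>B. infdist b A)"

end

theory Submission
  imports Defs
begin

definition fsupp :: "(nat \<Rightarrow> real) \<Rightarrow> bool" where
  "fsupp f \<longleftrightarrow> finite {i. f i \<noteq> 0}"

lemma theta_sub:
  assumes "finite F" "\<And>i. i \<notin> F \<Longrightarrow> x i = 0 \<and> y i = 0"
  shows "theta x y = (\<Sum>i\<in>F. \<bar>x i - y i\<bar>)"
  unfolding theta_def by (rule suminf_finite) (use assms in auto)

lemma theta_commute: "theta x y = theta y x"
  unfolding theta_def by (simp add: abs_minus_commute)

lemma theta_nonneg:
  assumes "fsupp x" "fsupp y" shows "0 \<le> theta x y"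
proof -
  have "theta x y = (\<Sum>i\<in>{i. x i \<noteq> 0} \<union> {i. y i \<noteq> 0}. \<bar>x i - y i\<bar>)"
    by (rule theta_sub) (use assms in \<open>auto simp: fsupp_def\<close>)
  then show ?thesis by (simp add: sum_nonneg)
qed

lemma theta_coord:
  assumes "fsupp x" "fsupp y" shows "\<bar>x i - y i\<bar> \<le> theta x y"
proof -
  let ?F = "insert i ({i. x i \<noteq> 0} \<union> {i. y i \<noteq> 0})"
  have "theta x y = (\<Sum>i\<in>?F. \<bar>x i - y i\<bar>)"
    by (rule theta_sub) (use assms in \<open>auto simp: fsupp_def\<close>)
  moreover have "\<bar>x i - y i\<bar> \<le> (\<Sum>i\<in>?F. \<bar>x i - y i\<bar>)"
    by (rule member_le_sum) (use assms in \<open>auto simp: fsupp_def\<close>)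
  ultimately show ?thesis by simp
qed

lemma theta_triangle:
  assumes "fsupp x" "fsupp y" "fsupp z" shows "theta x z \<le> theta x y + theta y z"
proof -
  let ?F = "{i. x i \<noteq> 0} \<union> {i. y i \<noteq> 0} \<union> {i. z i \<noteq> 0}"
  have fin: "finite ?F" using assms by (auto simp: fsupp_def)
  have "theta x z = (\<Sum>i\<in>?F. \<bar>x i - z i\<bar>)" "theta x y = (\<Sum>i\<in>?F. \<bar>x i - y i\<bar>)"
       "theta y z = (\<Sum>i\<in>?F. \<bar>y i - z i\<bar>)"
    by (rule theta_sub; use fin in auto)+
  moreover have "(\<Sum>i\<in>?F. \<bar>x i - z i\<bar>) \<le> (\<Sum>i\<in>?F. \<bar>x i - y i\<bar> + \<bar>y i - z i\<bar>)"
    by (rule sum_mono) simp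
  ultimately show ?thesis by (simp add: sum.distrib)
qed

definition NN :: "real \<Rightarrow> nat" where
  "NN s = (LEAST n::nat. 1 \<le> n \<and> s < 1 - 1/2^n)"

lemma NN_ex: fixes s :: real assumes "s < 1" shows "\<exists>n::nat. 1 \<le> n \<and> s < 1 - 1/2^n"
proof -
  obtain n where "(1/2::real)^n < 1 - s" using real_arch_pow_inv[of "1 - s" "1/2"] assms by auto
  have "(1/2::real)^(Suc n) \<le> (1/2)^n" by simp
  hence "(1/2::real)^(Suc n) < 1 - s" using \<open>(1/2::real)^n < 1 - s\<close> by linarith
  thus ?thesis by (intro exI[of _ "Suc n"]) (auto simp: power_one_over)
qed

lemma NN_props:
  assumes "s < 1"
  shows "1 \<le> NN s" "s < 1 - 1/2^(NN s)" "0 \<le> s \<Longrightarrow> 1 - 1/2^(NN s - 1) \<le> s"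
proof -
  have *: "1 \<le> NN s \<and> s < 1 - 1/2^(NN s)"
    unfolding NN_def by (rule LeastI_ex) (rule NN_ex[OF assms])
  thus "1 \<le> NN s" "s < 1 - 1/2^(NN s)" by auto
  assume "0 \<le> s"
  show "1 - 1/2^(NN s - 1) \<le> s"
  proof (cases "NN s = 1")
    case True thus ?thesis using \<open>0 \<le> s\<close> by simp
  next
    case False
    hence "NN s - 1 < NN s" "1 \<le> NN s - 1" using * by auto
    hence "\<not> (1 \<le> NN s - 1 \<and> s < 1 - 1/2^(NN s - 1))"
      unfolding NN_def using not_less_Least by blast
    thus ?thesis using \<open>1 \<le> NN s - 1\<close> by auto
  qed
qed

lemma NN_mono: assumes "s \<le> t" "t < 1" shows "NN s \<le> NN t"
  unfolding NN_def[of s] using NN_props[OF assms(2)] assms by (intro Least_le) auto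

definition TT :: "real \<Rightarrow> real" where
  "TT s = (1/2)^(NN s + 1) * alpha (2^(NN s) * (s - (1 - 1/2^(NN s - 1))))"

lemma gamma_lt1:
  assumes "s < 1"
  shows "gamma s = (\<lambda>i. if i = 1 then s/2 else if i = NN s + 1 then TT s else 0)"
proof -
  obtain m where m: "NN s = Suc m" using NN_props(1)[OF assms] by (cases "NN s") auto
  show ?thesis
    using assms unfolding gamma_def TT_def NN_def[symmetric] Let_def xpt_def e_def m
    by (auto simp: fun_eq_iff field_simps)
qed

lemma gamma_ge1: "1 \<le> s \<Longrightarrow> gamma s = (\<lambda>i. if i = 1 then 1/2 else 0)"
  unfolding gamma_def xinf_def e_def by (auto simp: fun_eq_iff)

lemma fsupp_gamma: "fsupp (gamma s)"
proof (cases "s < 1")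
  case True
  have "{i. gamma s i \<noteq> 0} \<subseteq> {1, NN s + 1}" unfolding gamma_lt1[OF True] by auto
  thus ?thesis unfolding fsupp_def by (rule finite_subset) simp
next
  case False
  have "{i. gamma s i \<noteq> 0} \<subseteq> {1}" using gamma_ge1[of s] False by auto
  thus ?thesis unfolding fsupp_def by (rule finite_subset) simp
qed

lemma gamma_1: "0 \<le> s \<Longrightarrow> s \<le> 1 \<Longrightarrow> gamma s 1 = s/2"
  by (cases "s < 1") (auto simp: gamma_lt1 gamma_ge1)

lemma TT_bounds:
  assumes "0 \<le> s" "s < 1"
  shows "0 \<le> TT s" "TT s \<le> (s - (1 - 1/2^(NN s - 1)))/2" "TT s \<le> ((1 - 1/2^(NN s)) - s)/2"
proof -
  obtain m where m: "NN s = Suc m" using NN_props(1)[OF assms(2)] by (cases "NN s") auto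
  define tau where "tau = 2^(NN s) * (s - (1 - 1/2^(NN s - 1)))"
  have t0: "0 \<le> tau" using NN_props(3)[OF assms(2,1)] by (simp add: tau_def)
  have t1: "1 - tau = 2^(NN s) * ((1 - 1/2^(NN s)) - s)"
    unfolding tau_def m by (simp add: field_simps)
  have t1': "tau \<le> 1" using t1 NN_props(2)[OF assms(2)] by (smt (verit) zero_le_mult_iff zero_le_power)
  have TT: "TT s = alpha tau / 2^(NN s + 1)" by (simp add: TT_def tau_def power_one_over)
  have a0: "0 \<le> alpha tau" "alpha tau \<le> tau" "alpha tau \<le> 1 - tau"
    using t0 t1' by (auto simp: alpha_def)
  show "0 \<le> TT s" using TT a0 by simp
  show "TT s \<le> (s - (1 - 1/2^(NN s - 1)))/2"
    using a0(2) unfolding TT tau_def by (simp add: field_simps)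
  show "TT s \<le> ((1 - 1/2^(NN s)) - s)/2"
  proof -
    have "alpha tau / 2^(NN s+1) \<le> (2^NN s * ((1 - 1/2^(NN s)) - s)) / 2^(NN s + 1)"
      using a0(3) unfolding t1 by (intro divide_right_mono) auto
    also have "\<dots> = ((1 - 1/2^(NN s)) - s)/2" by simp
    finally show ?thesis using TT by simp
  qed
qed

lemma TT_lip:
  assumes "0 \<le> s" "s < 1" "0 \<le> t" "t < 1" "NN s = NN t"
  shows "\<bar>TT s - TT t\<bar> \<le> \<bar>s - t\<bar>/2"
proof -
  have al: "\<bar>alpha a - alpha b\<bar> \<le> \<bar>a - b\<bar>" for a b
    by (auto simp: alpha_def)
  define n where "n = NN s"
  have "\<bar>TT s - TT t\<bar> = \<bar>alpha (2^n * (s - (1 - 1/2^(n - 1)))) - alpha (2^n * (t - (1 - 1/2^(n - 1))))\<bar> / 2^(n+1)"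
    unfolding TT_def n_def[symmetric] assms(5)[symmetric] by (simp add: power_one_over abs_divide flip: diff_divide_distrib)
  also have "\<dots> \<le> \<bar>2^n * (s - (1 - 1/2^(n - 1))) - 2^n * (t - (1 - 1/2^(n - 1)))\<bar> / 2^(n+1)"
    by (intro divide_right_mono al) simp
  also have "2^n * (s - (1 - 1/2^(n - 1))) - 2^n * (t - (1 - 1/2^(n - 1))) = (2::real)^n * (s - t)"
    by (simp add: algebra_simps)
  also have "\<bar>(2::real)^n * (s - t)\<bar> / 2^(n+1) = \<bar>s - t\<bar>/2"
    by (simp add: abs_mult)
  finally show ?thesis .
qed


lemma theta_self[simp]: "theta x x = 0"
  unfolding theta_def by simp

lemma theta_gamma_lower:
  assumes "0 \<le> s" "s \<le> 1" "0 \<le> t" "t \<le> 1"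
  shows "\<bar>s - t\<bar>/2 \<le> theta (gamma s) (gamma t)"
proof -
  have "\<bar>gamma s 1 - gamma t 1\<bar> \<le> theta (gamma s) (gamma t)"
    by (rule theta_coord[OF fsupp_gamma fsupp_gamma])
  moreover have "gamma s 1 = s/2" "gamma t 1 = t/2" using gamma_1 assms by auto
  moreover have "\<bar>s - t\<bar>/2 = \<bar>s/2 - t/2\<bar>" by (simp add: abs_divide flip: diff_divide_distrib)
  ultimately show ?thesis by simp
qed

lemma theta_gamma_upper_aux:
  assumes "0 \<le> s" "s \<le> t" "t \<le> 1"
  shows "theta (gamma s) (gamma t) \<le> t - s"
proof (cases "t < 1")
  case False
  hence t: "t = 1" using assms by simp
  show ?thesis
  proof (cases "s < 1")
    case False hence "s = 1" using t assms by simp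
    thus ?thesis using t by simp
  next
    case True
    have N1: "NN s + 1 \<noteq> 1" using NN_props(1)[OF True] by simp
    have "theta (gamma s) (gamma t) = (\<Sum>i\<in>{1, NN s + 1}. \<bar>gamma s i - gamma t i\<bar>)"
      by (rule theta_sub) (use True t in \<open>auto simp: gamma_lt1 gamma_ge1\<close>)
    also have "\<dots> = \<bar>s/2 - 1/2\<bar> + \<bar>TT s\<bar>"
      using N1 True t by (simp add: gamma_lt1 gamma_ge1)
    also have "\<dots> \<le> t - s"
    proof -
      have "0 \<le> 1/(2::real)^NN s" by simp
      hence "(1 - 1/2^NN s - s)/2 \<le> (1 - s)/(2::real)" by (intro divide_right_mono) auto
      hence "TT s \<le> (1 - s)/2" by (rule order.trans[OF TT_bounds(3)[OF assms(1) True]])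
      moreover have "\<bar>s/2 - 1/2\<bar> = (1 - s)/2" using True by simp
      moreover have "\<bar>TT s\<bar> = TT s" using TT_bounds(1)[OF assms(1) True] by simp
      ultimately show ?thesis using t by simp
    qed
    finally show ?thesis .
  qed
next
  case True
  hence s1: "s < 1" using assms by simp
  have N1: "NN s + 1 \<noteq> 1" "NN t + 1 \<noteq> 1" using NN_props(1)[OF s1] NN_props(1)[OF True] by simp_all
  have t0: "0 \<le> t" using assms by simp
  show ?thesis
  proof (cases "NN s = NN t")
    case True
    have "theta (gamma s) (gamma t) = (\<Sum>i\<in>{1, NN s + 1}. \<bar>gamma s i - gamma t i\<bar>)"
      by (rule theta_sub) (use True s1 \<open>t < 1\<close> in \<open>auto simp: gamma_lt1\<close>)
    also have "\<dots> = \<bar>s/2 - t/2\<bar> + \<bar>TT s - TT t\<bar>"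
      using N1 True s1 \<open>t < 1\<close> by (simp add: gamma_lt1)
    also have "\<dots> \<le> t - s"
    proof -
      have "\<bar>s/2 - t/2\<bar> = (t - s)/2" using assms by simp
      moreover have "\<bar>s - t\<bar> = t - s" using assms by simp
      ultimately show ?thesis using TT_lip[OF assms(1) s1 t0 \<open>t < 1\<close> True] by simp
    qed
    finally show ?thesis .
  next
    case False
    have lt: "NN s < NN t" using NN_mono[OF assms(2) \<open>t < 1\<close>] False by simp
    have "theta (gamma s) (gamma t) = (\<Sum>i\<in>{1, NN s + 1, NN t + 1}. \<bar>gamma s i - gamma t i\<bar>)"
      by (rule theta_sub) (use s1 \<open>t < 1\<close> in \<open>auto simp: gamma_lt1\<close>)
    also have "\<dots> = \<bar>s/2 - t/2\<bar> + \<bar>TT s\<bar> + \<bar>TT t\<bar>"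
      using N1 lt s1 \<open>t < 1\<close> by (simp add: gamma_lt1)
    also have "\<dots> \<le> t - s"
    proof -
      have "(1::real) / 2^(NN t - 1) \<le> 1 / 2^(NN s)"
        using lt by (intro divide_left_mono power_increasing) auto
      moreover have "\<bar>s/2 - t/2\<bar> = (t - s)/2" using assms by simp
      moreover have "\<bar>TT s\<bar> = TT s" "\<bar>TT t\<bar> = TT t"
        using TT_bounds(1)[OF assms(1) s1] TT_bounds(1)[OF t0 \<open>t < 1\<close>] by simp_all
      ultimately show ?thesis
        using TT_bounds(3)[OF assms(1) s1] TT_bounds(2)[OF t0 \<open>t < 1\<close>] by simp
    qed
    finally show ?thesis .
  qed
qed

lemma theta_gamma_upper:
  assumes "0 \<le> s" "s \<le> 1" "0 \<le> t" "t \<le> 1"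
  shows "theta (gamma s) (gamma t) \<le> \<bar>s - t\<bar>"
proof (cases "s \<le> t")
  case True thus ?thesis using theta_gamma_upper_aux[of s t] assms by simp
next
  case False thus ?thesis using theta_gamma_upper_aux[of t s] assms by (simp add: theta_commute)
qed

lemma theta_r_commute: "theta_r r u v = theta_r r v u"
  unfolding theta_r_def by (simp add: theta_commute)

lemma theta_r_nonneg: "0 \<le> r \<Longrightarrow> 0 \<le> theta_r r u v"
  unfolding theta_r_def by (simp add: theta_nonneg fsupp_gamma)

lemma theta_r_self[simp]: "theta_r r u u = 0"
  unfolding theta_r_def by simp

lemma theta_r_triangle: "0 \<le> r \<Longrightarrow> theta_r r u w \<le> theta_r r u v + theta_r r v w"
  unfolding theta_r_def
  using theta_triangle[OF fsupp_gamma[of "u/r"] fsupp_gamma[of "v/r"] fsupp_gamma[of "w/r"]]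
  by (simp add: mult_left_mono flip: distrib_left)

lemma theta_r_upper:
  assumes "0 < r" "0 \<le> u" "u \<le> r" "0 \<le> v" "v \<le> r"
  shows "theta_r r u v \<le> \<bar>u - v\<bar>"
proof -
  have "theta_r r u v \<le> r * \<bar>u/r - v/r\<bar>"
    unfolding theta_r_def using assms
    by (intro mult_left_mono theta_gamma_upper) auto
  also have "\<dots> = \<bar>u - v\<bar>" using assms by (simp add: abs_mult flip: diff_divide_distrib)
  finally show ?thesis .
qed

lemma theta_r_lower:
  assumes "0 < r" "0 \<le> u" "u \<le> r" "0 \<le> v" "v \<le> r"
  shows "\<bar>u - v\<bar>/2 \<le> theta_r r u v"
proof -
  have "r * (\<bar>u/r - v/r\<bar>/2) \<le> theta_r r u v"
    unfolding theta_r_def using assms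
    by (intro mult_left_mono theta_gamma_lower) auto
  moreover have "r * (\<bar>u/r - v/r\<bar>/2) = \<bar>u - v\<bar>/2" using assms by (simp add: abs_mult flip: diff_divide_distrib)
  ultimately show ?thesis by simp
qed


definition lipc :: "'a set \<Rightarrow> ('a \<Rightarrow> 'a \<Rightarrow> real) \<Rightarrow> (real \<Rightarrow> 'a) \<Rightarrow> real \<Rightarrow> bool" where
  "lipc M d g L \<longleftrightarrow> 0 \<le> L \<and> (\<forall>t\<in>{0..1}. g t \<in> M) \<and>
     (\<forall>s\<in>{0..1}. \<forall>t\<in>{0..1}. d (g s) (g t) \<le> L * \<bar>s - t\<bar>)"

lemma lipc_mcurve:
  assumes "lipc M d g L" shows "mcurve M d g"
  unfolding mcurve_def
proof (intro conjI ballI allI impI)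
  show "t \<in> {0..1} \<Longrightarrow> g t \<in> M" for t using assms by (auto simp: lipc_def)
  fix t e :: real assume t: "t \<in> {0..1}" and e: "0 < e"
  have L: "0 \<le> L" using assms by (auto simp: lipc_def)
  show "\<exists>\<delta>>0. \<forall>s\<in>{0..1}. \<bar>s - t\<bar> < \<delta> \<longrightarrow> d (g s) (g t) < e"
  proof (intro exI[of _ "e/(L+1)"] conjI ballI impI)
    show "0 < e/(L+1)" using e L by simp
    fix s assume s: "s \<in> {0..1}" "\<bar>s - t\<bar> < e/(L+1)"
    have "d (g s) (g t) \<le> L * \<bar>s - t\<bar>" using assms s t by (auto simp: lipc_def)
    also have "\<dots> \<le> L * (e/(L+1))" using s L by (intro mult_left_mono) auto
    also have "\<dots> < e" using L e by (simp add: field_simps)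
    finally show "d (g s) (g t) < e" .
  qed
qed

lemma lipc_length:
  assumes "lipc M d g L" shows "curve_length d g \<le> ereal L"
  unfolding curve_length_def
proof (rule SUP_least)
  fix p :: "nat \<times> (nat \<Rightarrow> real)" assume "p \<in> {(n, t). (\<forall>i\<le>n. 0 \<le> t i \<and> t i \<le> 1) \<and> (\<forall>i<n. t i \<le> t (Suc i))}"
  then obtain n t where p: "p = (n, t)" and t01: "\<forall>i\<le>n. 0 \<le> t i \<and> t i \<le> 1"
    and mono: "\<forall>i<n. t i \<le> t (Suc i)" by auto
  have "(\<Sum>i<n. d (g (t i)) (g (t (Suc i)))) \<le> (\<Sum>i<n. L * (t (Suc i) - t i))"
  proof (rule sum_mono)
    fix i assume "i \<in> {..<n}"
    hence "t i \<in> {0..1}" "t (Suc i) \<in> {0..1}" "t i \<le> t (Suc i)" using t01 mono by auto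
    thus "d (g (t i)) (g (t (Suc i))) \<le> L * (t (Suc i) - t i)"
      using assms unfolding lipc_def by (metis abs_of_nonneg abs_minus_commute diff_ge_0_iff_ge)
  qed
  also have "\<dots> = L * (t n - t 0)" by (simp add: sum_distrib_left[symmetric] sum_lessThan_telescope)
  also have "\<dots> \<le> L * 1"
  proof -
    have "t n \<le> 1" "0 \<le> t 0" using t01 by auto
    thus ?thesis using assms by (intro mult_left_mono) (auto simp: lipc_def)
  qed
  finally show "ereal (\<Sum>i<fst p. d (g (snd p i)) (g (snd p (Suc i)))) \<le> ereal L" using p by simp
qed

lemma lipc_intrinsic:
  assumes "lipc M d g L" "g 0 = x" "g 1 = y"
  shows "intrinsic_dist M d x y \<le> ereal L"
  unfolding intrinsic_dist_def
  by (rule INF_lower2[of g]) (use assms lipc_mcurve lipc_length in auto)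

lemma quasiconvex_from_lipc:
  assumes "\<And>x y e. x \<in> M \<Longrightarrow> y \<in> M \<Longrightarrow> 0 < e \<Longrightarrow>
     \<exists>g L. lipc M d g L \<and> g 0 = x \<and> g 1 = y \<and> L \<le> C * d x y + e"
  shows "quasiconvex C M d"
  unfolding quasiconvex_def
proof (intro ballI)
  fix x y assume xy: "x \<in> M" "y \<in> M"
  show "intrinsic_dist M d x y \<le> ereal (C * d x y)"
  proof (rule ereal_le_epsilon2)
    fix e :: real assume e: "0 < e"
    obtain g L where g: "lipc M d g L" "g 0 = x" "g 1 = y" "L \<le> C * d x y + e"
      using assms[OF xy e] by blast
    have "intrinsic_dist M d x y \<le> ereal L" by (rule lipc_intrinsic[OF g(1-3)])
    also have "\<dots> \<le> ereal (C * d x y) + ereal e" using g(4) by simp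
    finally show "intrinsic_dist M d x y \<le> ereal (C * d x y) + ereal e" .
  qed
qed

lemma lipc_rev: "lipc M d g L \<Longrightarrow> lipc M d (\<lambda>t. g (1 - t)) L"
  unfolding lipc_def
  by (smt (verit, ccfv_SIG) atLeastAtMost_iff)

lemma lipc_mono: "lipc M d g L \<Longrightarrow> L \<le> L' \<Longrightarrow> lipc M d g L'"
  unfolding lipc_def by (meson abs_ge_zero mult_right_mono order.trans)

lemma lipc_const: "Metric_space M d \<Longrightarrow> x \<in> M \<Longrightarrow> lipc M d (\<lambda>_. x) 0"
  unfolding lipc_def using Metric_space.zero[of M d x x] by auto

lemma lip_glue:
  assumes ms: "Metric_space M d" and abc: "a \<le> b" "b \<le> c"
    and inM: "\<And>t. t \<in> {a..c} \<Longrightarrow> g t \<in> M"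
    and l1: "\<And>s t. s \<in> {a..b} \<Longrightarrow> t \<in> {a..b} \<Longrightarrow> d (g s) (g t) \<le> L * \<bar>s - t\<bar>"
    and l2: "\<And>s t. s \<in> {b..c} \<Longrightarrow> t \<in> {b..c} \<Longrightarrow> d (g s) (g t) \<le> L * \<bar>s - t\<bar>"
    and s: "s \<in> {a..c}" and t: "t \<in> {a..c}"
  shows "d (g s) (g t) \<le> L * \<bar>s - t\<bar>"
proof -
  have main: "d (g s) (g t) \<le> L * \<bar>s - t\<bar>" if st: "s \<in> {a..b}" "t \<in> {b..c}" for s t
  proof -
    have "d (g s) (g t) \<le> d (g s) (g b) + d (g b) (g t)"
      using st abc by (intro Metric_space.triangle[OF ms] inM) auto
    also have "\<dots> \<le> L * \<bar>s - b\<bar> + L * \<bar>b - t\<bar>"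
      using st abc by (intro add_mono l1 l2) auto
    also have "\<dots> = L * \<bar>s - t\<bar>" using st by (simp add: abs_if algebra_simps)
    finally show ?thesis .
  qed
  show ?thesis
  proof (cases "s \<le> b")
    case True note s' = True
    show ?thesis
    proof (cases "t \<le> b")
      case True thus ?thesis using s' s t l1 by auto
    next
      case False thus ?thesis using s' s t main by auto
    qed
  next
    case False note s' = False
    show ?thesis
    proof (cases "t \<le> b")
      case True
      hence "d (g t) (g s) \<le> L * \<bar>t - s\<bar>" using s' s t main by auto
      thus ?thesis by (simp add: Metric_space.commute[OF ms] abs_minus_commute)
    next
      case False thus ?thesis using s' s t l2 by auto
    qed
  qed
qed

lemma lipc_concat:
  assumes ms: "Metric_space M d" and g1: "lipc M d g1 L1" and g2: "lipc M d g2 L2"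
    and j: "g1 1 = g2 0"
  shows "\<exists>g. lipc M d g (L1 + L2) \<and> g 0 = g1 0 \<and> g 1 = g2 1"
proof -
  have L: "0 \<le> L1" "0 \<le> L2" using g1 g2 by (auto simp: lipc_def)
  show ?thesis
  proof (cases "L1 = 0")
    case True
    have "d (g1 0) (g1 1) \<le> 0" using g1 True by (auto simp: lipc_def dest: bspec[of _ _ 0])
    hence "g1 0 = g1 1"
      using g1 ms Metric_space.zero[OF ms] Metric_space.nonneg[OF ms] unfolding lipc_def
      by (metis atLeastAtMost_iff order_antisym_conv zero_le_one order_refl)
    thus ?thesis using g2 True j by (intro exI[of _ g2]) auto
  next
    case False note L1 = False
    show ?thesis
    proof (cases "L2 = 0")
      case True
      have "d (g2 0) (g2 1) \<le> 0" using g2 True by (auto simp: lipc_def dest: bspec[of _ _ 0])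
      hence "g2 0 = g2 1"
        using g2 ms Metric_space.zero[OF ms] Metric_space.nonneg[OF ms] unfolding lipc_def
        by (metis atLeastAtMost_iff order_antisym_conv zero_le_one order_refl)
      thus ?thesis using g1 True j by (intro exI[of _ g1]) auto
    next
      case False
      define S where "S = L1 + L2"
      define la where "la = L1 / S"
      have S: "0 < S" using L L1 False by (simp add: S_def)
      have la: "0 < la" "la < 1" using L L1 False S by (auto simp: la_def S_def field_simps)
      have la2: "1 - la = L2 / S" using S by (simp add: la_def S_def field_simps)
      define g where "g t = (if t \<le> la then g1 (t / la) else g2 ((t - la) / (1 - la)))" for t
      have gA: "g t = g1 (t / la)" if "t \<le> la" for t using that by (simp add: g_def)
      have gB: "g t = g2 ((t - la) / (1 - la))" if "la \<le> t" for t
        using that j la by (cases "t = la") (auto simp: g_def)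
      have inM: "g t \<in> M" if "t \<in> {0..1}" for t
      proof (cases "t \<le> la")
        case True thus ?thesis using g1 that la gA by (auto simp: lipc_def field_simps)
      next
        case False thus ?thesis using g2 that la gB[of t] by (auto simp: lipc_def field_simps)
      qed
      have l1: "d (g s) (g t) \<le> S * \<bar>s - t\<bar>" if "s \<in> {0..la}" "t \<in> {0..la}" for s t
      proof -
        have "s / la \<in> {0..1}" "t / la \<in> {0..1}" using that la by auto
        hence "d (g1 (s / la)) (g1 (t / la)) \<le> L1 * \<bar>s / la - t / la\<bar>"
          using g1 unfolding lipc_def by blast
        hence "d (g s) (g t) \<le> L1 * \<bar>s / la - t / la\<bar>" using that by (simp add: gA)
        also have "\<bar>s / la - t / la\<bar> = \<bar>s - t\<bar> / la" using la by (simp add: abs_divide flip: diff_divide_distrib)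
        also have "L1 * (\<bar>s - t\<bar> / la) = S * \<bar>s - t\<bar>" using S L1 by (simp add: la_def)
        finally show ?thesis .
      qed
      have l2: "d (g s) (g t) \<le> S * \<bar>s - t\<bar>" if "s \<in> {la..1}" "t \<in> {la..1}" for s t
      proof -
        have "(s - la) / (1 - la) \<in> {0..1}" "(t - la) / (1 - la) \<in> {0..1}" using that la by auto
        hence "d (g2 ((s - la) / (1 - la))) (g2 ((t - la) / (1 - la))) \<le> L2 * \<bar>(s - la) / (1 - la) - (t - la) / (1 - la)\<bar>"
          using g2 unfolding lipc_def by blast
        hence "d (g s) (g t) \<le> L2 * \<bar>(s - la) / (1 - la) - (t - la) / (1 - la)\<bar>" using that by (simp add: gB)
        also have "\<bar>(s - la) / (1 - la) - (t - la) / (1 - la)\<bar> = \<bar>s - t\<bar> / (1 - la)" using la by (simp add: abs_divide flip: diff_divide_distrib)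
        also have "L2 * (\<bar>s - t\<bar> / (1 - la)) = S * \<bar>s - t\<bar>" using S False unfolding la2 by simp
        finally show ?thesis .
      qed
      have "\<forall>s\<in>{0..1}. \<forall>t\<in>{0..1}. d (g s) (g t) \<le> S * \<bar>s - t\<bar>"
      proof (intro ballI)
        fix s t :: real assume st: "s \<in> {0..1}" "t \<in> {0..1}"
        show "d (g s) (g t) \<le> S * \<bar>s - t\<bar>"
          by (rule lip_glue[OF ms _ _ _ l1 l2]) (use la inM st in auto)
      qed
      hence "lipc M d g S"
        unfolding lipc_def using S inM by auto
      moreover have "g 0 = g1 0" using gA la by simp
      moreover have "g 1 = g2 1" using gB la by simp
      ultimately show ?thesis by (auto simp: S_def)
    qed
  qed
qed

lemma lipc_concat3:
  assumes ms: "Metric_space M d" and "lipc M d g1 L1" "lipc M d g2 L2" "lipc M d g3 L3"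
    and "g1 1 = g2 0" "g2 1 = g3 0"
  shows "\<exists>g. lipc M d g (L1 + L2 + L3) \<and> g 0 = g1 0 \<and> g 1 = g3 1"
proof -
  obtain h where h: "lipc M d h (L1 + L2)" "h 0 = g1 0" "h 1 = g2 1"
    using lipc_concat[OF ms assms(2,3,5)] by blast
  show ?thesis using lipc_concat[OF ms h(1) assms(4)] h assms(6) by auto
qed


locale glue = Metric_space M d for M :: "real list set" and d +
  fixes QS :: "real list set" and R :: "real list \<Rightarrow> real"
  assumes QS_sub: "QS \<subseteq> M" and Rpos: "\<And>x. x \<in> QS \<Longrightarrow> 0 < R x"
begin

definition P' :: "real list set" where
  "P' = {x @ [0] | x. x \<in> M - QS} \<union> {x @ [y] | x y. x \<in> QS \<and> 0 \<le> y \<and> y \<le> R x}"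

definition H :: "real list \<Rightarrow> real" where
  "H a = (if butlast a \<in> QS then theta_r (R (butlast a)) (last a) 0 else 0)"

definition d' :: "real list \<Rightarrow> real list \<Rightarrow> real" where
  "d' a b = (if butlast a = butlast b \<and> butlast a \<in> QS
     then theta_r (R (butlast a)) (last a) (last b)
     else H a + d (butlast a) (butlast b) + H b)"

lemma P'_iff: "a \<in> P' \<longleftrightarrow> butlast a \<in> M \<and> a = butlast a @ [last a] \<and>
   (if butlast a \<in> QS then 0 \<le> last a \<and> last a \<le> R (butlast a) else last a = 0)"
  unfolding P'_def using QS_sub by (auto; metis append_butlast_last_id append_is_Nil_conv not_Cons_self2)

lemma P'_D:
  assumes "a \<in> P'"
  shows "butlast a \<in> M" "a = butlast a @ [last a]"
    "butlast a \<in> QS \<Longrightarrow> 0 \<le> last a" "butlast a \<in> QS \<Longrightarrow> last a \<le> R (butlast a)"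
    "butlast a \<notin> QS \<Longrightarrow> last a = 0"
  using assms unfolding P'_iff by (auto split: if_splits)

lemma P'_I0: "x \<in> M \<Longrightarrow> x @ [0] \<in> P'"
  unfolding P'_iff using Rpos by (auto simp: less_imp_le)

lemma P'_I: "x \<in> QS \<Longrightarrow> 0 \<le> y \<Longrightarrow> y \<le> R x \<Longrightarrow> x @ [y] \<in> P'"
  unfolding P'_iff using QS_sub by auto

lemma H_nonneg: "0 \<le> H a"
  unfolding H_def using Rpos by (auto intro: theta_r_nonneg less_imp_le)

lemma H_le: "a \<in> P' \<Longrightarrow> H a \<le> last a"
  unfolding H_def using P'_D[of a] Rpos theta_r_upper[of "R (butlast a)" "last a" 0] by auto

lemma H_0: "H (x @ [0]) = 0"
  unfolding H_def by simp

lemma Dnn: "x \<in> QS \<Longrightarrow> 0 \<le> theta_r (R x) u v"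
  using Rpos by (intro theta_r_nonneg less_imp_le) auto

lemma d'_nonneg: "0 \<le> d' a b"
  unfolding d'_def using H_nonneg[of a] H_nonneg[of b] Dnn[of "butlast a" "last a" "last b"] nonneg[of "butlast a" "butlast b"]
  by auto

lemma d'_commute: "d' a b = d' b a"
  unfolding d'_def by (auto simp: commute theta_r_commute)

lemma d'_lift: "d' (x @ [0]) (y @ [0]) = d x y" if "x \<in> M" "y \<in> M"
  unfolding d'_def using that by (auto simp: H_0)

lemma d'_arc: "d' (x @ [u]) (x @ [v]) = theta_r (R x) u v" if "x \<in> QS"
  unfolding d'_def using that by auto

lemma d'_down: "a \<in> P' \<Longrightarrow> d' a (butlast a @ [0]) = H a"
  unfolding d'_def H_def using P'_D(1)[of a] by auto

lemma d'_lower_z: "a \<in> P' \<Longrightarrow> z \<in> M \<Longrightarrow> d' a (z @ [0]) \<le> H a + d (butlast a) z"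
  unfolding d'_def H_def using P'_D(1)[of a] by (auto simp: H_0)

lemma d'_zero: "a \<in> P' \<Longrightarrow> b \<in> P' \<Longrightarrow> d' a b = 0 \<longleftrightarrow> a = b"
proof
  assume a: "a \<in> P'" and b: "b \<in> P'" and z: "d' a b = 0"
  show "a = b"
  proof (cases "butlast a = butlast b \<and> butlast a \<in> QS")
    case True
    have "d' a b = theta_r (R (butlast a)) (last a) (last b)" unfolding d'_def by (rule if_P[OF True])
    hence "theta_r (R (butlast a)) (last a) (last b) = 0" using z by simp
    moreover have "\<bar>last a - last b\<bar>/2 \<le> theta_r (R (butlast a)) (last a) (last b)"
      using P'_D[OF a] P'_D[OF b] True Rpos by (intro theta_r_lower) auto
    ultimately have "last a = last b" by simp
    thus ?thesis using P'_D(2)[OF a] P'_D(2)[OF b] True by metis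
  next
    case False
    have "d' a b = H a + d (butlast a) (butlast b) + H b" unfolding d'_def by (rule if_not_P[OF False])
    hence "H a + d (butlast a) (butlast b) + H b = 0" using z by simp
    hence "d (butlast a) (butlast b) = 0" using H_nonneg[of a] H_nonneg[of b] nonneg[of "butlast a" "butlast b"] by linarith
    hence eq: "butlast a = butlast b" using P'_D(1)[OF a] P'_D(1)[OF b] by simp
    hence "butlast a \<notin> QS" using False by simp
    hence "last a = 0" "last b = 0" using P'_D(5)[OF a] P'_D(5)[OF b] eq by auto
    thus ?thesis using P'_D(2)[OF a] P'_D(2)[OF b] eq by metis
  qed
next
  assume a: "a \<in> P'" "a = b"
  thus "d' a b = 0" unfolding d'_def H_def using P'_D(1)[OF a(1)] by auto
qed

lemma d'_triangle:
  assumes a: "a \<in> P'" and b: "b \<in> P'" and c: "c \<in> P'"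
  shows "d' a c \<le> d' a b + d' b c"
proof -
  define D where "D x u v = theta_r (R x) u v" for x u v
  have Dtri: "D x u w \<le> D x u v + D x v w" if "x \<in> QS" for x u v w
    unfolding D_def using Rpos[OF that] by (intro theta_r_triangle) simp
  have Dcom: "D x u v = D x v u" for x u v unfolding D_def by (rule theta_r_commute)
  have HD: "H a = (if butlast a \<in> QS then D (butlast a) (last a) 0 else 0)" for a
    unfolding H_def D_def by simp
  have dD: "d' a b = (if butlast a = butlast b \<and> butlast a \<in> QS then D (butlast a) (last a) (last b)
     else H a + d (butlast a) (butlast b) + H b)" for a b
    unfolding d'_def D_def by simp
  have Ma: "butlast a \<in> M" and Mb: "butlast b \<in> M" and Mc: "butlast c \<in> M"
    using P'_D(1) a b c by auto
  have Hn: "0 \<le> H a" "0 \<le> H b" "0 \<le> H c" by (rule H_nonneg)+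
  have dn: "0 \<le> d x y" for x y by simp
  show ?thesis
  proof (cases "butlast a = butlast c \<and> butlast a \<in> QS")
    case ac: True
    show ?thesis
    proof (cases "butlast a = butlast b")
      case True
      thus ?thesis using ac Dtri[of "butlast a" "last a" "last c" "last b"] unfolding dD by auto
    next
      case False
      have "D (butlast a) (last a) (last c) \<le> D (butlast a) (last a) 0 + D (butlast a) 0 (last c)"
        using ac by (rule Dtri[OF conjunct2])
      moreover have "H a = D (butlast a) (last a) 0" "H c = D (butlast a) 0 (last c)"
        using ac by (auto simp: HD Dcom)
      moreover have "d' a c = D (butlast a) (last a) (last c)" unfolding dD[of a c] by (rule if_P[OF ac])
      moreover have "d' a b = H a + d (butlast a) (butlast b) + H b" unfolding dD[of a b] using False by simp
      moreover have "d' b c = H b + d (butlast b) (butlast c) + H c" unfolding dD[of b c] using False ac by auto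
      ultimately show ?thesis using Hn dn[of "butlast a" "butlast b"] dn[of "butlast b" "butlast c"] by linarith
    qed
  next
    case nac: False
    show ?thesis
    proof (cases "butlast a = butlast b \<and> butlast a \<in> QS")
      case ab: True
      have "D (butlast a) (last a) 0 \<le> D (butlast a) (last a) (last b) + D (butlast a) (last b) 0"
        using ab by (rule Dtri[OF conjunct2])
      moreover have "H a = D (butlast a) (last a) 0" "H b = D (butlast a) (last b) 0"
        using ab by (auto simp: HD)
      ultimately show ?thesis using ab nac unfolding dD[of a c] dD[of a b] dD[of b c] by auto
    next
      case nab: False
      show ?thesis
      proof (cases "butlast b = butlast c \<and> butlast b \<in> QS")
        case bc: True
        have "D (butlast c) (last c) 0 \<le> D (butlast c) (last c) (last b) + D (butlast c) (last b) 0"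
          using bc by (intro Dtri) auto
        moreover have "H c = D (butlast c) (last c) 0" "H b = D (butlast c) (last b) 0"
          using bc by (auto simp: HD)
        moreover have "D (butlast c) (last c) (last b) = D (butlast b) (last b) (last c)"
          using bc Dcom by simp
        ultimately show ?thesis using bc nab unfolding dD[of a c] dD[of a b] dD[of b c] by auto
      next
        case nbc: False
        have "d (butlast a) (butlast c) \<le> d (butlast a) (butlast b) + d (butlast b) (butlast c)"
          using Ma Mb Mc by (rule triangle)
        thus ?thesis using nac nab nbc Hn unfolding dD[of a c] dD[of a b] dD[of b c] by auto
      qed
    qed
  qed
qed

lemma metric_P': "Metric_space P' d'"
  by unfold_locales (auto simp: d'_nonneg d'_commute d'_zero intro: d'_triangle)

lemma arc_curve:
  assumes x: "x \<in> QS" and u: "0 \<le> u" "u \<le> R x" and v: "0 \<le> v" "v \<le> R x"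
  shows "lipc P' d' (\<lambda>t. x @ [u + t * (v - u)]) \<bar>v - u\<bar>"
  unfolding lipc_def
proof (intro conjI ballI)
  have inI: "0 \<le> u + t * (v - u) \<and> u + t * (v - u) \<le> R x" if "t \<in> {0..1}" for t :: real
  proof -
    have "u + t * (v - u) = (1 - t) * u + t * v" by (simp add: algebra_simps)
    moreover have "0 \<le> (1 - t) * u + t * v" using that u v by simp
    moreover have "(1 - t) * u + t * v \<le> (1 - t) * R x + t * R x"
      using that u v by (intro add_mono mult_left_mono) auto
    ultimately show ?thesis by (simp add: algebra_simps)
  qed
  fix t :: real assume t: "t \<in> {0..1}"
  show "x @ [u + t * (v - u)] \<in> P'" using inI[OF t] x by (intro P'_I) auto
  fix s :: real assume s: "s \<in> {0..1}"
  have "d' (x @ [u + s * (v - u)]) (x @ [u + t * (v - u)]) = theta_r (R x) (u + s * (v - u)) (u + t * (v - u))"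
    using x by (rule d'_arc)
  also have "\<dots> \<le> \<bar>(u + s * (v - u)) - (u + t * (v - u))\<bar>"
    using inI[OF s] inI[OF t] Rpos[OF x] by (intro theta_r_upper) auto
  also have "\<dots> = \<bar>v - u\<bar> * \<bar>s - t\<bar>" by (simp add: mult.commute flip: abs_mult left_diff_distrib)
  finally show "d' (x @ [u + s * (v - u)]) (x @ [u + t * (v - u)]) \<le> \<bar>v - u\<bar> * \<bar>s - t\<bar>" .
qed simp

lemma lift_curve:
  assumes "lipc M d g L"
  shows "lipc P' d' (\<lambda>t. g t @ [0]) L"
  using assms unfolding lipc_def by (auto simp: d'_lift P'_I0)

lemma down_curve:
  assumes a: "a \<in> P'"
  shows "\<exists>g L. lipc P' d' g L \<and> g 0 = a \<and> g 1 = butlast a @ [0] \<and> L \<le> 2 * H a"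
proof (cases "butlast a \<in> QS")
  case True
  have "lipc P' d' (\<lambda>t. butlast a @ [last a + t * (0 - last a)]) \<bar>0 - last a\<bar>"
    using P'_D[OF a] True Rpos[OF True] by (intro arc_curve) auto
  moreover have "\<bar>0 - last a\<bar> \<le> 2 * H a"
  proof -
    have "\<bar>last a - 0\<bar>/2 \<le> theta_r (R (butlast a)) (last a) 0"
      using P'_D[OF a] True Rpos[OF True] by (intro theta_r_lower) auto
    thus ?thesis unfolding H_def using True by simp
  qed
  moreover have "butlast a @ [last a + 0 * (0 - last a)] = a" using P'_D(2)[OF a] by simp
  ultimately show ?thesis by (intro exI[of _ "(\<lambda>t. butlast a @ [last a + t * (0 - last a)])"] exI) auto
next
  case False
  hence "a = butlast a @ [0]" using P'_D[OF a] by metis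
  thus ?thesis using lipc_const[OF metric_P' a] H_nonneg[of a]
    by (intro exI[of _ "\<lambda>_. a"] exI[of _ 0]) auto
qed

lemma curves_P':
  assumes qc: "\<And>x y. x \<in> M \<Longrightarrow> y \<in> M \<Longrightarrow> \<exists>g L. lipc M d g L \<and> g 0 = x \<and> g 1 = y \<and> L \<le> 2 * d x y"
    and a: "a \<in> P'" and b: "b \<in> P'"
  shows "\<exists>g L. lipc P' d' g L \<and> g 0 = a \<and> g 1 = b \<and> L \<le> 2 * d' a b"
proof (cases "butlast a = butlast b \<and> butlast a \<in> QS")
  case True
  have "lipc P' d' (\<lambda>t. butlast a @ [last a + t * (last b - last a)]) \<bar>last b - last a\<bar>"
    using P'_D[OF a] P'_D[OF b] True by (intro arc_curve) auto
  moreover have "\<bar>last b - last a\<bar> \<le> 2 * d' a b"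
  proof -
    have "\<bar>last a - last b\<bar>/2 \<le> theta_r (R (butlast a)) (last a) (last b)"
      using P'_D[OF a] P'_D[OF b] True Rpos by (intro theta_r_lower) auto
    moreover have "d' a b = theta_r (R (butlast a)) (last a) (last b)" unfolding d'_def by (rule if_P[OF True])
    ultimately show ?thesis by (simp add: abs_minus_commute)
  qed
  moreover have "butlast a @ [last a + 0 * (last b - last a)] = a" using P'_D(2)[OF a] by simp
  moreover have "butlast a @ [last a + 1 * (last b - last a)] = b" using P'_D(2)[OF b] True by simp
  ultimately show ?thesis by (intro exI[of _ "(\<lambda>t. butlast a @ [last a + t * (last b - last a)])"] exI) auto
next
  case False
  obtain g1 L1 where g1: "lipc P' d' g1 L1" "g1 0 = a" "g1 1 = butlast a @ [0]" "L1 \<le> 2 * H a"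
    using down_curve[OF a] by blast
  obtain g3 L3 where g3: "lipc P' d' g3 L3" "g3 0 = b" "g3 1 = butlast b @ [0]" "L3 \<le> 2 * H b"
    using down_curve[OF b] by blast
  obtain g2 L2 where g2: "lipc M d g2 L2" "g2 0 = butlast a" "g2 1 = butlast b" "L2 \<le> 2 * d (butlast a) (butlast b)"
    using qc P'_D(1)[OF a] P'_D(1)[OF b] by blast
  obtain g where g: "lipc P' d' g (L1 + L2 + L3)" "g 0 = a" "g 1 = b"
    using lipc_concat3[OF metric_P' g1(1) lift_curve[OF g2(1)] lipc_rev[OF g3(1)]] g1 g2 g3 by auto
  have "L1 + L2 + L3 \<le> 2 * d' a b" using g1 g2 g3 False unfolding d'_def by auto
  thus ?thesis using g by blast
qed

end


lemma (in Metric_space) limitin_finite_eventually_eq: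
  assumes lim: "limitin mtopology f l sequentially"
    and ev: "eventually (\<lambda>i. f i \<in> F) sequentially" and fin: "finite F"
  shows "eventually (\<lambda>i. f i = l) sequentially"
proof -
  have lM: "l \<in> M" using lim limitin_metric by blast
  define G where "G = (F - {l}) \<inter> M"
  define \<delta> where "\<delta> = Min (insert 1 (d l ` G))"
  have finG: "finite G" using fin by (simp add: G_def)
  have pos: "0 < \<delta>" unfolding \<delta>_def using finG lM by (auto simp: G_def)
  have le: "\<delta> \<le> d l z" if "z \<in> G" for z unfolding \<delta>_def using finG that by (intro Min_le) auto
  have "eventually (\<lambda>i. f i \<in> M \<and> d (f i) l < \<delta>) sequentially"
    using lim pos limitin_metric by blast
  with ev show ?thesis
  proof (rule eventually_elim2)
    fix i assume "f i \<in> F" "f i \<in> M \<and> d (f i) l < \<delta>"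
    thus "f i = l" using le[of "f i"] commute[of "f i" l] by (auto simp: G_def)
  qed
qed

lemma (in glue) compact_P':
  assumes cM: "compact_space mtopology" and Rbd: "\<And>x. x \<in> QS \<Longrightarrow> R x \<le> 1"
    and Rfin: "\<And>e. 0 < e \<Longrightarrow> finite {x \<in> QS. e \<le> R x}"
  shows "compact_space (Metric_space.mtopology P' d')"
proof -
  interpret P: Metric_space P' d' by (rule metric_P')
  show ?thesis
    unfolding P.compact_space_sequentially
  proof (intro allI impI)
    fix \<sigma> :: "nat \<Rightarrow> real list" assume "range \<sigma> \<subseteq> P'"
    hence sP: "\<And>i. \<sigma> i \<in> P'" by auto
    define x where "x i = butlast (\<sigma> i)" for i
    have xM: "x i \<in> M" for i using P'_D(1)[OF sP] by (simp add: x_def)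
    obtain l r1 where l: "l \<in> M" and r1: "strict_mono r1" and lim1: "limitin mtopology (x \<circ> r1) l sequentially"
      using cM xM unfolding compact_space_sequentially by (metis image_subsetI)
    define h where "h i = (if x i \<in> QS then R (x i) else 0)" for i
    define y where "y i = last (\<sigma> i)" for i
    have h01: "h i \<in> {0..1}" for i using Rbd Rpos by (auto simp: h_def less_imp_le)
    have y01: "y i \<in> {0..1}" for i
      using P'_D[OF sP, of i] Rbd[of "x i"] by (cases "x i \<in> QS") (auto simp: y_def x_def)
    have hyx: "0 \<le> y i \<and> y i \<le> h i" for i
      using P'_D[OF sP, of i] by (cases "x i \<in> QS") (auto simp: y_def x_def h_def)
    have sc: "seq_compact ({0..1::real} \<times> {0..1::real})"
      by (intro compact_imp_seq_compact compact_Times compact_Icc)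
    obtain hy r2 where hy: "hy \<in> {0..1} \<times> {0..1}" and r2: "strict_mono r2"
      and lim2: "((\<lambda>i. (h i, y i)) \<circ> r1 \<circ> r2) \<longlonglongrightarrow> hy"
      using seq_compactE[OF sc, of "(\<lambda>i. (h i, y i)) \<circ> r1"] h01 y01 by auto
    define r where "r = r1 \<circ> r2"
    have r: "strict_mono r" unfolding r_def by (rule strict_mono_o[OF r1 r2])
    have limx: "limitin mtopology (x \<circ> r) l sequentially"
      using limitin_subsequence[OF r2 lim1] by (simp add: r_def o_assoc)
    obtain hs ys where hyeq: "hy = (hs, ys)" by (cases hy)
    have limh: "(\<lambda>i. h (r i)) \<longlonglongrightarrow> hs" using tendsto_fst[OF lim2] by (simp add: hyeq r_def o_def)
    have limy: "(\<lambda>i. y (r i)) \<longlonglongrightarrow> ys" using tendsto_snd[OF lim2] by (simp add: hyeq r_def o_def)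
    have hs0: "0 \<le> hs" using hy hyeq by simp
    have dx0: "(\<lambda>i. d (x (r i)) l) \<longlonglongrightarrow> 0"
      using limx unfolding limitin_metric_dist_null by (simp add: o_def)
    show "\<exists>l r. l \<in> P' \<and> strict_mono r \<and> limitin P.mtopology (\<sigma> \<circ> r) l sequentially"
    proof (cases "hs = 0")
      case True
      have lim0: "(\<lambda>i. h (r i) + d (x (r i)) l) \<longlonglongrightarrow> 0"
        using tendsto_add_zero[OF limh[unfolded True] dx0] .
      have bnd: "d' (\<sigma> (r i)) (l @ [0]) \<le> h (r i) + d (x (r i)) l" for i
      proof -
        have "d' (\<sigma> (r i)) (l @ [0]) \<le> H (\<sigma> (r i)) + d (x (r i)) l"
          using d'_lower_z[OF sP l] by (simp add: x_def)
        moreover have "H (\<sigma> (r i)) \<le> h (r i)"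
          using H_le[OF sP, of "r i"] hyx[of "r i"] unfolding H_def h_def x_def y_def
          by (auto split: if_splits)
        ultimately show ?thesis by simp
      qed
      have "((\<lambda>i. d' ((\<sigma> \<circ> r) i) (l @ [0])) \<longlonglongrightarrow> 0)"
        by (rule tendsto_sandwich[OF _ _ tendsto_const lim0]) (auto simp: d'_nonneg bnd)
      hence "limitin P.mtopology (\<sigma> \<circ> r) (l @ [0]) sequentially"
        unfolding P.limitin_metric_dist_null using sP P'_I0[OF l] by auto
      thus ?thesis using r P'_I0[OF l] by blast
    next
      case False
      hence hsp: "0 < hs" using hs0 by simp
      have ev1: "eventually (\<lambda>i. hs/2 < h (r i)) sequentially"
        by (rule order_tendstoD(1)[OF limh]) (use hsp in simp)
      have ev2: "eventually (\<lambda>i. (x \<circ> r) i \<in> {z \<in> QS. hs/2 \<le> R z}) sequentially"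
        using ev1 proof (rule eventually_mono)
        fix i assume "hs/2 < h (r i)"
        thus "(x \<circ> r) i \<in> {z \<in> QS. hs/2 \<le> R z}" using hsp by (auto simp: h_def split: if_splits)
      qed
      have ev3: "eventually (\<lambda>i. (x \<circ> r) i = l) sequentially"
        by (rule limitin_finite_eventually_eq[OF limx ev2 Rfin]) (use hsp in simp)
      have ev4: "eventually (\<lambda>i. x (r i) = l \<and> x (r i) \<in> QS) sequentially"
        using eventually_conj[OF ev3 ev2] by (rule eventually_mono) auto
      then obtain N where "\<forall>n\<ge>N. x (r n) = l \<and> x (r n) \<in> QS" unfolding eventually_sequentially by blast
      hence "x (r N) = l \<and> x (r N) \<in> QS" by blast
      hence lQ: "l \<in> QS" by metis
      have ys0: "0 \<le> ys"
      proof (rule tendsto_lowerbound[OF limy])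
        show "eventually (\<lambda>i. 0 \<le> y (r i)) sequentially" using hyx by simp
      qed simp
      have ysR: "ys \<le> R l"
      proof (rule tendsto_upperbound[OF limy])
        show "eventually (\<lambda>i. y (r i) \<le> R l) sequentially"
          using ev4
        proof (rule eventually_mono)
          fix i assume a: "x (r i) = l \<and> x (r i) \<in> QS"
          have "y (r i) \<le> h (r i)" using hyx[of "r i"] by simp
          also have "h (r i) = R (x (r i))" using conjunct2[OF a] unfolding h_def by (rule if_P)
          also have "\<dots> = R l" using conjunct1[OF a] by (rule arg_cong)
          finally show "y (r i) \<le> R l" .
        qed
      qed simp
      have lysP: "l @ [ys] \<in> P'" by (rule P'_I[OF lQ ys0 ysR])
      have limy0: "(\<lambda>i. \<bar>y (r i) - ys\<bar>) \<longlonglongrightarrow> 0"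
        using tendsto_rabs_zero[OF LIM_zero[OF limy]] .
      have bnd: "eventually (\<lambda>i. d' ((\<sigma> \<circ> r) i) (l @ [ys]) \<le> \<bar>y (r i) - ys\<bar>) sequentially"
        using ev4
      proof (rule eventually_mono)
        fix i assume "x (r i) = l \<and> x (r i) \<in> QS"
        hence e: "\<sigma> (r i) = l @ [y (r i)]" using P'_D(2)[OF sP, of "r i"] by (simp add: x_def y_def)
        have "d' (\<sigma> (r i)) (l @ [ys]) = theta_r (R l) (y (r i)) ys" unfolding e using lQ by (rule d'_arc)
        also have "\<dots> \<le> \<bar>y (r i) - ys\<bar>"
          using Rpos[OF lQ] hyx[of "r i"] ys0 ysR \<open>x (r i) = l \<and> x (r i) \<in> QS\<close>
          by (intro theta_r_upper) (auto simp: h_def)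
        finally show "d' ((\<sigma> \<circ> r) i) (l @ [ys]) \<le> \<bar>y (r i) - ys\<bar>" by simp
      qed
      have "((\<lambda>i. d' ((\<sigma> \<circ> r) i) (l @ [ys])) \<longlonglongrightarrow> 0)"
        by (rule tendsto_sandwich[OF _ bnd tendsto_const limy0]) (auto simp: d'_nonneg)
      hence "limitin P.mtopology (\<sigma> \<circ> r) (l @ [ys]) sequentially"
        unfolding P.limitin_metric_dist_null using sP lysP by auto
      thus ?thesis using r lysP by blast
    qed
  qed
qed


definition lev :: "(nat \<Rightarrow> nat \<Rightarrow> real list) \<Rightarrow> nat \<Rightarrow> bool" where
  "lev Q k \<longleftrightarrow> Metric_space (Pk Q k) (rhok Q k) \<and>
     compact_space (Metric_space.mtopology (Pk Q k) (rhok Q k)) \<and>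
     (\<forall>x\<in>Pk Q k. \<forall>y\<in>Pk Q k. \<exists>g L. lipc (Pk Q k) (rhok Q k) g L \<and> g 0 = x \<and> g 1 = y \<and> L \<le> 2 * rhok Q k x y) \<and>
     (\<forall>a\<in>Pk Q k. length a = k)"

lemma adm_D:
  assumes "admissible Q" "1 \<le> K"
  shows "inj (Q K)" "range (Q K) \<subseteq> Pk Q K"
proof -
  have "inj (Q K) \<and> range (Q K) \<subseteq> Pk Q K - Lk Q K" using assms unfolding admissible_def by blast
  thus "inj (Q K)" "range (Q K) \<subseteq> Pk Q K" by auto
qed

lemma rad_pos: "0 < rad K n" by (simp add: rad_def)
lemma rad_le: "rad K n \<le> (1/2)^(K+1)"
  unfolding rad_def by (intro power_decreasing) auto
lemma rad_le1: "rad K n \<le> 1"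
  unfolding rad_def by (intro power_le_one) auto

lemma rad_fin: assumes "0 < ep" shows "finite {n. ep \<le> rad K n}"
proof -
  obtain N where N: "(1/2::real)^N < ep" using real_arch_pow_inv[of ep "1/2"] assms by auto
  have "{n. ep \<le> rad K n} \<subseteq> {..N}"
  proof
    fix n assume "n \<in> {n. ep \<le> rad K n}"
    hence "ep \<le> (1/2)^(n+1+K)" by (simp add: rad_def)
    moreover have "n > N \<Longrightarrow> (1/2::real)^(n+1+K) \<le> (1/2)^N" by (intro power_decreasing) auto
    ultimately show "n \<in> {..N}" using N by (cases "n > N") auto
  qed
  thus ?thesis by (rule finite_subset) simp
qed

lemma lev1: "lev Q (Suc 0)"
proof -
  let ?M = "Pk Q (Suc 0)" and ?d = "rhok Q (Suc 0)"
  have M: "?M = {[t] | t. 0 \<le> t \<and> t \<le> 1}" by simp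
  have d: "?d a b = theta_r 1 (hd a) (hd b)" for a b by simp
  have up: "\<bar>s - t\<bar>/2 \<le> ?d [s] [t] \<and> ?d [s] [t] \<le> \<bar>s - t\<bar>" if "0 \<le> s" "s \<le> 1" "0 \<le> t" "t \<le> 1" for s t
    using theta_r_lower[of 1 s t] theta_r_upper[of 1 s t] that by simp
  interpret Metric_space ?M ?d
  proof
    show "0 \<le> ?d x y" for x y by (simp add: theta_r_nonneg)
    show "?d x y = ?d y x" for x y by (simp add: theta_r_commute)
    show "?d x z \<le> ?d x y + ?d y z" for x y z by (simp add: theta_r_triangle)
    fix x y assume "x \<in> ?M" "y \<in> ?M"
    then obtain s t where st: "x = [s]" "y = [t]" "0 \<le> s" "s \<le> 1" "0 \<le> t" "t \<le> 1" by auto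
    show "?d x y = 0 \<longleftrightarrow> x = y" using up[OF st(3-6)] st(1,2) by auto
  qed
  have ms: "Metric_space ?M ?d" ..
  have cs: "compact_space mtopology"
    unfolding compact_space_sequentially
  proof (intro allI impI)
    fix \<sigma> :: "nat \<Rightarrow> real list" assume "range \<sigma> \<subseteq> ?M"
    hence "\<forall>i. \<exists>t. \<sigma> i = [t] \<and> 0 \<le> t \<and> t \<le> 1" by auto
    then obtain tt where tt: "\<And>i. \<sigma> i = [tt i] \<and> 0 \<le> tt i \<and> tt i \<le> 1" by metis
    obtain l r where l: "l \<in> {0..1}" and r: "strict_mono r" and lim: "(tt \<circ> r) \<longlonglongrightarrow> l"
      using seq_compactE[OF compact_imp_seq_compact[OF compact_Icc[of 0 1]], of tt] tt by auto
    have lim0: "(\<lambda>i. \<bar>tt (r i) - l\<bar>) \<longlonglongrightarrow> 0"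
      using tendsto_rabs_zero[OF LIM_zero[OF lim]] by (simp add: o_def)
    have "((\<lambda>i. ?d ((\<sigma> \<circ> r) i) [l]) \<longlonglongrightarrow> 0)"
      by (rule tendsto_sandwich[OF _ _ tendsto_const lim0]) (use tt up l in \<open>auto simp: theta_r_nonneg\<close>)
    hence "limitin mtopology (\<sigma> \<circ> r) [l] sequentially"
      unfolding limitin_metric_dist_null using tt l by auto
    thus "\<exists>l r. l \<in> ?M \<and> strict_mono r \<and> limitin mtopology (\<sigma> \<circ> r) l sequentially"
      using r l by auto
  qed
  have cv: "\<forall>x\<in>?M. \<forall>y\<in>?M. \<exists>g L. lipc ?M ?d g L \<and> g 0 = x \<and> g 1 = y \<and> L \<le> 2 * ?d x y"
  proof (intro ballI)
    fix x y assume "x \<in> ?M" "y \<in> ?M"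
    then obtain s t where st: "x = [s]" "y = [t]" "0 \<le> s" "s \<le> 1" "0 \<le> t" "t \<le> 1" by auto
    define g where "g \<tau> = [s + \<tau> * (t - s)]" for \<tau> :: real
    have inI: "0 \<le> s + \<tau> * (t - s) \<and> s + \<tau> * (t - s) \<le> 1" if "\<tau> \<in> {0..1}" for \<tau> :: real
    proof -
      have "s + \<tau> * (t - s) = (1 - \<tau>) * s + \<tau> * t" by (simp add: algebra_simps)
      moreover have "0 \<le> (1 - \<tau>) * s + \<tau> * t" using that st by simp
      moreover have "(1 - \<tau>) * s + \<tau> * t \<le> (1 - \<tau>) * 1 + \<tau> * 1"
        using that st by (intro add_mono mult_left_mono) auto
      ultimately show ?thesis by (simp add: algebra_simps)
    qed
    have "lipc ?M ?d g \<bar>t - s\<bar>"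
      unfolding lipc_def
    proof (intro conjI ballI)
      fix \<tau> :: real assume "\<tau> \<in> {0..1}"
      thus "g \<tau> \<in> ?M" using inI by (auto simp: g_def)
      fix \<tau>' :: real assume "\<tau>' \<in> {0..1}"
      hence "?d (g \<tau>') (g \<tau>) \<le> \<bar>(s + \<tau>' * (t - s)) - (s + \<tau> * (t - s))\<bar>"
        using up inI \<open>\<tau> \<in> {0..1}\<close> unfolding g_def by blast
      also have "\<dots> = \<bar>t - s\<bar> * \<bar>\<tau>' - \<tau>\<bar>" by (simp add: mult.commute flip: abs_mult left_diff_distrib)
      finally show "?d (g \<tau>') (g \<tau>) \<le> \<bar>t - s\<bar> * \<bar>\<tau>' - \<tau>\<bar>" .
    qed simp
    moreover have "\<bar>t - s\<bar> \<le> 2 * ?d x y" using up[OF st(3-6)] st by (simp add: abs_minus_commute)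
    ultimately show "\<exists>g L. lipc ?M ?d g L \<and> g 0 = x \<and> g 1 = y \<and> L \<le> 2 * ?d x y"
      using st by (intro exI[of _ g] exI[of _ "\<bar>t - s\<bar>"]) (auto simp: g_def)
  qed
  show ?thesis unfolding lev_def using ms cs cv by auto
qed

definition QSk :: "(nat \<Rightarrow> nat \<Rightarrow> real list) \<Rightarrow> nat \<Rightarrow> real list set" where
  "QSk Q K = range (Q K)"
definition Rk :: "(nat \<Rightarrow> nat \<Rightarrow> real list) \<Rightarrow> nat \<Rightarrow> real list \<Rightarrow> real" where
  "Rk Q K x = rad K (inv (Q K) x)"

lemma glue_inst:
  assumes adm: "admissible Q" and ms: "Metric_space (Pk Q (Suc k)) (rhok Q (Suc k))"
  shows "glue (Pk Q (Suc k)) (rhok Q (Suc k)) (QSk Q (Suc k)) (Rk Q (Suc k))"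
proof -
  interpret Metric_space "Pk Q (Suc k)" "rhok Q (Suc k)" by (rule ms)
  show ?thesis
    by unfold_locales (use adm_D[OF adm, of "Suc k"] in \<open>auto simp: QSk_def Rk_def rad_pos\<close>)
qed

lemma Pk_Suc_eq:
  assumes adm: "admissible Q" and ms: "Metric_space (Pk Q (Suc k)) (rhok Q (Suc k))"
  shows "Pk Q (Suc (Suc k)) = glue.P' (Pk Q (Suc k)) (QSk Q (Suc k)) (Rk Q (Suc k))"
proof -
  interpret glue "Pk Q (Suc k)" "rhok Q (Suc k)" "QSk Q (Suc k)" "Rk Q (Suc k)"
    by (rule glue_inst[OF adm ms])
  have inj: "inj (Q (Suc k))" using adm_D[OF adm, of "Suc k"] by simp
  show ?thesis unfolding P'_def unfolding Pk.simps QSk_def Rk_def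
    using inj by (auto simp: inv_f_f)
qed

lemma rhok_Suc_eq:
  assumes adm: "admissible Q" and ms: "Metric_space (Pk Q (Suc k)) (rhok Q (Suc k))"
  shows "rhok Q (Suc (Suc k)) = glue.d' (rhok Q (Suc k)) (QSk Q (Suc k)) (Rk Q (Suc k))"
proof -
  interpret glue "Pk Q (Suc k)" "rhok Q (Suc k)" "QSk Q (Suc k)" "Rk Q (Suc k)"
    by (rule glue_inst[OF adm ms])
  show ?thesis
    unfolding d'_def H_def unfolding fun_eq_iff QSk_def Rk_def rhok.simps Let_def
    by (auto simp: theta_r_commute)
qed

lemma lev_Suc:
  assumes adm: "admissible Q" and L: "lev Q (Suc k)"
  shows "lev Q (Suc (Suc k))"
proof -
  have ms: "Metric_space (Pk Q (Suc k)) (rhok Q (Suc k))" using L by (simp add: lev_def)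
  interpret glue "Pk Q (Suc k)" "rhok Q (Suc k)" "QSk Q (Suc k)" "Rk Q (Suc k)"
    by (rule glue_inst[OF adm ms])
  have P: "Pk Q (Suc (Suc k)) = P'" by (rule Pk_Suc_eq[OF adm ms])
  have d: "rhok Q (Suc (Suc k)) = d'" by (rule rhok_Suc_eq[OF adm ms])
  have fin: "finite {x \<in> QSk Q (Suc k). ep \<le> Rk Q (Suc k) x}" if "0 < ep" for ep
  proof -
    have "{x \<in> QSk Q (Suc k). ep \<le> Rk Q (Suc k) x} \<subseteq> Q (Suc k) ` {n. ep \<le> rad (Suc k) n}"
      using adm_D[OF adm, of "Suc k"] by (auto simp: QSk_def Rk_def inv_f_f)
    thus ?thesis by (rule finite_subset) (intro finite_imageI rad_fin that)
  qed
  have "compact_space (Metric_space.mtopology P' d')"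
    by (rule compact_P') (use L fin in \<open>auto simp: lev_def QSk_def Rk_def rad_le1\<close>)
  moreover have "\<forall>x\<in>P'. \<forall>y\<in>P'. \<exists>g L. lipc P' d' g L \<and> g 0 = x \<and> g 1 = y \<and> L \<le> 2 * d' x y"
    using curves_P' L unfolding lev_def by blast
  moreover have "\<forall>a\<in>P'. length a = Suc (Suc k)"
  proof
    fix a assume a: "a \<in> P'"
    have "length (butlast a) = Suc k" using P'_D(1)[OF a] L by (auto simp: lev_def)
    moreover have "a \<noteq> []" using P'_D(2)[OF a] by (metis append_is_Nil_conv not_Cons_self2)
    ultimately show "length a = Suc (Suc k)" by simp
  qed
  ultimately show ?thesis unfolding lev_def P d using metric_P' by auto
qed

lemma lev_all: assumes adm: "admissible Q" shows "lev Q (Suc k)"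
  by (induction k) (auto intro: lev1 lev_Suc[OF adm])

lemma lift_Pk:
  assumes adm: "admissible Q" and a: "a \<in> Pk Q (Suc k)"
  shows "a @ [0] \<in> Pk Q (Suc (Suc k))"
proof -
  have ms: "Metric_space (Pk Q (Suc k)) (rhok Q (Suc k))" using lev_all[OF adm] by (simp add: lev_def)
  interpret glue "Pk Q (Suc k)" "rhok Q (Suc k)" "QSk Q (Suc k)" "Rk Q (Suc k)"
    by (rule glue_inst[OF adm ms])
  show ?thesis unfolding Pk_Suc_eq[OF adm ms] using a by (rule P'_I0)
qed

lemma lift_rhok:
  assumes adm: "admissible Q" and a: "a \<in> Pk Q (Suc k)" and b: "b \<in> Pk Q (Suc k)"
  shows "rhok Q (Suc (Suc k)) (a @ [0]) (b @ [0]) = rhok Q (Suc k) a b"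
proof -
  have ms: "Metric_space (Pk Q (Suc k)) (rhok Q (Suc k))" using lev_all[OF adm] by (simp add: lev_def)
  interpret glue "Pk Q (Suc k)" "rhok Q (Suc k)" "QSk Q (Suc k)" "Rk Q (Suc k)"
    by (rule glue_inst[OF adm ms])
  show ?thesis unfolding rhok_Suc_eq[OF adm ms] using a b by (rule d'_lift)
qed

lemma down_Pk:
  assumes adm: "admissible Q" and b: "b \<in> Pk Q (Suc (Suc k))"
  shows "butlast b \<in> Pk Q (Suc k) \<and> rhok Q (Suc (Suc k)) b (butlast b @ [0]) \<le> (1/2)^(Suc k + 1)"
proof -
  have ms: "Metric_space (Pk Q (Suc k)) (rhok Q (Suc k))" using lev_all[OF adm] by (simp add: lev_def)
  interpret glue "Pk Q (Suc k)" "rhok Q (Suc k)" "QSk Q (Suc k)" "Rk Q (Suc k)"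
    by (rule glue_inst[OF adm ms])
  have bP: "b \<in> P'" using b Pk_Suc_eq[OF adm ms] by metis
  have "d' b (butlast b @ [0]) = H b" by (rule d'_down[OF bP])
  also have "H b \<le> (1/2)^(Suc k + 1)"
  proof (cases "butlast b \<in> QSk Q (Suc k)")
    case True
    have "H b \<le> last b" by (rule H_le[OF bP])
    also have "\<dots> \<le> Rk Q (Suc k) (butlast b)" using P'_D(4)[OF bP True] .
    also have "\<dots> \<le> (1/2)^(Suc k + 1)" unfolding Rk_def by (rule rad_le)
    finally show ?thesis .
  next
    case False thus ?thesis by (simp add: H_def)
  qed
  finally show ?thesis using P'_D(1)[OF bP] rhok_Suc_eq[OF adm ms] by simp
qed


lemma emb_rep: "emb (a @ replicate m 0) = emb a"
  unfolding emb_def by (auto simp: fun_eq_iff nth_append)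

lemma emb_inj: assumes "length a = length b" "emb a = emb b" shows "a = b"
proof (rule nth_equalityI)
  show "length a = length b" by fact
  fix i assume "i < length a"
  hence "emb a i = a ! i" "emb b i = b ! i" using assms(1) by (auto simp: emb_def)
  thus "a ! i = b ! i" using assms(2) by simp
qed

lemma map_emb: "map (emb a) [0..<length a] = a"
  unfolding emb_def by (rule nth_equalityI) auto

lemma Pk_len: assumes "admissible Q" "a \<in> Pk Q K" shows "length a = K"
proof (cases K)
  case 0 thus ?thesis using assms by simp
next
  case (Suc k) thus ?thesis using lev_all[OF assms(1), of k] assms(2) by (auto simp: lev_def)
qed

lemma rep_Suc: "a @ replicate (Suc m) (0::real) = (a @ replicate m 0) @ [0]"
  by (simp add: replicate_append_same[symmetric])

lemma lift_rep:
  assumes adm: "admissible Q" and a: "a \<in> Pk Q (Suc k)"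
  shows "a @ replicate m 0 \<in> Pk Q (Suc k + m)"
proof (induction m)
  case 0 thus ?case using a by simp
next
  case (Suc m)
  have "(a @ replicate m 0) @ [0] \<in> Pk Q (Suc (Suc (k + m)))"
    using lift_Pk[OF adm, of "a @ replicate m 0" "k + m"] Suc by simp
  thus ?case by (simp only: rep_Suc) simp
qed

lemma lift_rep_rho:
  assumes adm: "admissible Q" and a: "a \<in> Pk Q (Suc k)" and b: "b \<in> Pk Q (Suc k)"
  shows "rhok Q (Suc k + m) (a @ replicate m 0) (b @ replicate m 0) = rhok Q (Suc k) a b"
proof (induction m)
  case 0 thus ?case by simp
next
  case (Suc m)
  have "rhok Q (Suc (Suc (k + m))) ((a @ replicate m 0) @ [0]) ((b @ replicate m 0) @ [0])
      = rhok Q (Suc (k + m)) (a @ replicate m 0) (b @ replicate m 0)"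
    using lift_rhok[OF adm, of "a @ replicate m 0" "k + m" "b @ replicate m 0"]
      lift_rep[OF adm a, of m] lift_rep[OF adm b, of m] by simp
  thus ?case using Suc by (simp only: rep_Suc) simp
qed

lemma rho_inf_eq:
  assumes adm: "admissible Q" and K: "1 \<le> K" and a: "a \<in> Pk Q K" and b: "b \<in> Pk Q K"
  shows "rho_inf Q (emb a) (emb b) = rhok Q K a b"
proof -
  define P where "P k = (1 \<le> k \<and> emb a \<in> emb ` Pk Q k \<and> emb b \<in> emb ` Pk Q k)" for k
  define k0 where "k0 = (LEAST k. P k)"
  have PK: "P K" using K a b by (auto simp: P_def)
  have P0: "P k0" unfolding k0_def by (rule LeastI[of P, OF PK])
  have le: "k0 \<le> K" unfolding k0_def by (rule Least_le[of P K, OF PK])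
  obtain a0 b0 where a0: "a0 \<in> Pk Q k0" "emb a0 = emb a" and b0: "b0 \<in> Pk Q k0" "emb b0 = emb b"
    using P0 unfolding P_def by force
  obtain k' where k': "k0 = Suc k'" using P0 unfolding P_def by (cases k0) auto
  define m where "m = K - k0"
  have Km: "K = Suc k' + m" using le k' by (simp add: m_def)
  have la0: "length a0 = k0" "length b0 = k0" using Pk_len[OF adm] a0 b0 by auto
  have "rho_inf Q (emb a) (emb b) = rhok Q k0 (map (emb a) [0..<k0]) (map (emb b) [0..<k0])"
    unfolding rho_inf_def Let_def k0_def[symmetric] P_def[symmetric] by simp
  also have "\<dots> = rhok Q k0 a0 b0"
    using map_emb[of a0] map_emb[of b0] a0 b0 la0 by simp
  also have "\<dots> = rhok Q K (a0 @ replicate m 0) (b0 @ replicate m 0)"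
    using lift_rep_rho[OF adm, of a0 k' b0 m] a0 b0 k' Km by simp
  also have "a0 @ replicate m 0 = a"
  proof (rule emb_inj)
    show "length (a0 @ replicate m 0) = length a" using la0 Pk_len[OF adm a] Km k' by simp
    show "emb (a0 @ replicate m 0) = emb a" using a0 by (simp add: emb_rep)
  qed
  also have "b0 @ replicate m 0 = b"
  proof (rule emb_inj)
    show "length (b0 @ replicate m 0) = length b" using la0 Pk_len[OF adm b] Km k' by simp
    show "emb (b0 @ replicate m 0) = emb b" using b0 by (simp add: emb_rep)
  qed
  finally show ?thesis .
qed

lemma Pcal_common:
  assumes adm: "admissible Q" and x: "x \<in> Pcal Q" and y: "y \<in> Pcal Q"
  shows "\<exists>k a b. a \<in> Pk Q (Suc k) \<and> b \<in> Pk Q (Suc k) \<and> x = emb a \<and> y = emb b"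
proof -
  obtain k1 a where a: "a \<in> Pk Q k1" "x = emb a" "1 \<le> k1" using x unfolding Pcal_def by auto
  obtain k2 b where b: "b \<in> Pk Q k2" "y = emb b" "1 \<le> k2" using y unfolding Pcal_def by auto
  define k where "k = max k1 k2 - 1"
  have k: "Suc k = max k1 k2" using a(3) by (simp add: k_def)
  obtain k1' where k1': "k1 = Suc k1'" using a(3) by (cases k1) auto
  obtain k2' where k2': "k2 = Suc k2'" using b(3) by (cases k2) auto
  have "a @ replicate (Suc k - k1) 0 \<in> Pk Q (Suc k)"
    using lift_rep[OF adm, of a k1' "Suc k - k1"] a k1' k by simp
  moreover have "b @ replicate (Suc k - k2) 0 \<in> Pk Q (Suc k)"
    using lift_rep[OF adm, of b k2' "Suc k - k2"] b k2' k by simp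
  ultimately show ?thesis using a b
    by (intro exI[of _ k] exI[of _ "a @ replicate (Suc k - k1) 0"] exI[of _ "b @ replicate (Suc k - k2) 0"]) (auto simp: emb_rep)
qed

lemma near_level:
  assumes adm: "admissible Q" and a: "a \<in> Pk Q (Suc k + m)"
  shows "\<exists>b \<in> Pk Q (Suc k). rhok Q (Suc k + m) a (b @ replicate m 0) \<le> (1/2)^(Suc k) - (1/2)^(Suc k + m)"
  using a
proof (induction m arbitrary: a)
  case 0
  have ms: "Metric_space (Pk Q (Suc k)) (rhok Q (Suc k))" using lev_all[OF adm] by (simp add: lev_def)
  have "rhok Q (Suc k) a a = 0" using Metric_space.zero[OF ms, of a a] 0 by simp
  thus ?case using 0 by (intro bexI[of _ a]) auto
next
  case (Suc m)
  have aP: "a \<in> Pk Q (Suc (Suc (k + m)))" using Suc.prems by simp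
  have d: "butlast a \<in> Pk Q (Suc (k + m))" "rhok Q (Suc (Suc (k + m))) a (butlast a @ [0]) \<le> (1/2)^(Suc (k+m) + 1)"
    using down_Pk[OF adm aP] by auto
  obtain b where b: "b \<in> Pk Q (Suc k)" "rhok Q (Suc k + m) (butlast a) (b @ replicate m 0) \<le> (1/2)^(Suc k) - (1/2)^(Suc k + m)"
    using Suc.IH[of "butlast a"] d(1) by auto
  have bm: "b @ replicate m 0 \<in> Pk Q (Suc (k + m))" using lift_rep[OF adm b(1), of m] by simp
  have ms: "Metric_space (Pk Q (Suc (Suc (k + m)))) (rhok Q (Suc (Suc (k + m))))"
    using lev_all[OF adm, of "Suc (k + m)"] unfolding lev_def by blast
  have "rhok Q (Suc (Suc (k + m))) a ((b @ replicate m 0) @ [0])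
     \<le> rhok Q (Suc (Suc (k + m))) a (butlast a @ [0]) + rhok Q (Suc (Suc (k + m))) (butlast a @ [0]) ((b @ replicate m 0) @ [0])"
    by (rule Metric_space.triangle[OF ms aP lift_Pk[OF adm d(1)] lift_Pk[OF adm bm]])
  also have "rhok Q (Suc (Suc (k + m))) (butlast a @ [0]) ((b @ replicate m 0) @ [0]) = rhok Q (Suc (k + m)) (butlast a) (b @ replicate m 0)"
    by (rule lift_rhok[OF adm d(1) bm])
  finally have "rhok Q (Suc (Suc (k + m))) a ((b @ replicate m 0) @ [0]) \<le> (1/2)^(Suc (k+m) + 1) + ((1/2)^(Suc k) - (1/2)^(Suc k + m))"
    using d(2) b(2) by simp
  also have "\<dots> = (1/2)^(Suc k) - (1/2)^(Suc k + Suc m)" by simp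
  finally show ?case using b(1) by (intro bexI[of _ b]) (simp_all only: rep_Suc, simp)
qed


lemma ms_dist: "Metric_space (SS::'z::metric_space set) dist"
  by unfold_locales (auto simp: dist_commute dist_triangle)

lemma lipc_subset: "lipc A d g L \<Longrightarrow> A \<subseteq> B \<Longrightarrow> lipc B d g L"
  unfolding lipc_def by auto

lemma NN_eq:
  assumes "0 \<le> s" "1 \<le> n" "1 - 1/2^(n-1) \<le> s" "s < 1 - 1/2^n"
  shows "NN s = n"
proof -
  have s1: "s < 1" using assms(4) by (smt (verit) divide_pos_pos zero_less_power)
  have le: "NN s \<le> n" unfolding NN_def by (rule Least_le) (use assms in simp)
  show ?thesis
  proof (rule ccontr)
    assume "NN s \<noteq> n"
    hence "NN s \<le> n - 1" using le by simp
    hence "(1::real)/2^(n-1) \<le> 1/2^(NN s)" by (intro divide_left_mono power_increasing) auto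
    thus False using NN_props(2)[OF s1] assms(3) by linarith
  qed
qed

definition bb :: "nat \<Rightarrow> real" where "bb m = 1 - 1/2^m"

lemma bb_props: "0 \<le> bb m" "bb m < 1" "bb m \<le> bb (Suc m)" "bb (Suc m) - bb m = 1/2^(Suc m)"
  unfolding bb_def by (auto simp: field_simps)

lemma bb_mono: "m \<le> n \<Longrightarrow> bb m \<le> bb n"
  unfolding bb_def by (simp add: divide_left_mono power_increasing)

lemma bb_lim: "bb \<longlonglongrightarrow> 1"
proof -
  have "(\<lambda>m. (1/2::real)^m) \<longlonglongrightarrow> 0" by (rule LIMSEQ_realpow_zero) auto
  hence "(\<lambda>m. 1 - (1/2::real)^m) \<longlonglongrightarrow> 1 - 0" by (intro tendsto_diff tendsto_const)
  thus ?thesis unfolding bb_def by (simp add: power_one_over)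
qed

lemma chain_curve:
  fixes A :: "'z::metric_space set"
  assumes cv: "\<And>p q. p \<in> A \<Longrightarrow> q \<in> A \<Longrightarrow> \<exists>g L. lipc A dist g L \<and> g 0 = p \<and> g 1 = q \<and> L \<le> 2 * dist p q"
    and z: "z \<in> closure A" and dl: "0 < \<delta>"
  shows "\<exists>p\<in>A. \<exists>g. lipc (closure A) dist g (2 * \<delta>) \<and> g 0 = p \<and> g 1 = z \<and> dist p z \<le> \<delta>"
proof -
  have "\<forall>i. \<exists>p\<in>A. dist p z < \<delta>/2^(i+2)"
    using z dl unfolding closure_approachable by simp
  then obtain p where p: "\<And>i. p i \<in> A" "\<And>i. dist (p i) z < \<delta>/2^(i+2)" by metis
  have pp: "2 * dist (p i) (p (Suc i)) \<le> \<delta>/2^i" for i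
  proof -
    have "dist (p i) (p (Suc i)) \<le> dist (p i) z + dist (p (Suc i)) z" by (rule dist_triangle2)
    also have "\<dots> \<le> \<delta>/2^(i+2) + \<delta>/2^(Suc i+2)" by (intro add_mono less_imp_le p(2))
    also have "\<dots> \<le> \<delta>/2^(i+1)" using dl by (simp add: field_simps)
    finally show ?thesis by (simp add: field_simps)
  qed
  have "\<forall>i. \<exists>c. lipc A dist c (\<delta>/2^i) \<and> c 0 = p i \<and> c 1 = p (Suc i)"
  proof
    fix i
    obtain c L where "lipc A dist c L" "c 0 = p i" "c 1 = p (Suc i)" "L \<le> 2 * dist (p i) (p (Suc i))"
      using cv[OF p(1) p(1)] by blast
    thus "\<exists>c. lipc A dist c (\<delta>/2^i) \<and> c 0 = p i \<and> c 1 = p (Suc i)"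
      using pp[of i] by (intro exI[of _ c]) (auto intro: lipc_mono)
  qed
  then obtain c where c: "\<And>i. lipc A dist (c i) (\<delta>/2^i)" "\<And>i. c i 0 = p i" "\<And>i. c i 1 = p (Suc i)"
    by metis
  define u where "u m \<tau> = 2^(Suc m) * (\<tau> - bb m)" for m \<tau>
  have u01: "u m \<tau> \<in> {0..1}" if "\<tau> \<in> {bb m..bb (Suc m)}" for m \<tau>
  proof -
    have h1: "0 \<le> \<tau> - bb m" "\<tau> - bb m \<le> 1/2^(Suc m)" using that bb_props(4)[of m] by auto
    have "u m \<tau> \<le> 2^(Suc m) * (1/2^(Suc m))" unfolding u_def by (rule mult_left_mono[OF h1(2)]) simp
    moreover have "0 \<le> u m \<tau>" unfolding u_def using h1(1) by simp
    ultimately show ?thesis by simp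
  qed
  define g where "g \<tau> = (if 1 \<le> \<tau> then z else c (NN \<tau> - 1) (2^(NN \<tau>) * (\<tau> - (1 - 1/2^(NN \<tau> - 1)))))" for \<tau>
  have piece: "g \<tau> = c m (u m \<tau>)" if "\<tau> \<in> {bb m..bb (Suc m)}" for m \<tau>
  proof (cases "\<tau> < bb (Suc m)")
    case True
    have t0: "0 \<le> \<tau>" using that bb_props(1)[of m] by simp
    have "NN \<tau> = Suc m"
      by (rule NN_eq[OF t0]) (use that True in \<open>auto simp: bb_def\<close>)
    moreover have "\<tau> < 1" using True bb_props(2)[of "Suc m"] by simp
    ultimately show ?thesis by (simp add: g_def u_def bb_def)
  next
    case False
    hence t: "\<tau> = bb (Suc m)" using that by simp
    have t0: "0 \<le> \<tau>" using t bb_props(1)[of "Suc m"] by simp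
    have "NN \<tau> = Suc (Suc m)"
      by (rule NN_eq[OF t0]) (use t in \<open>auto simp: bb_def field_simps\<close>)
    moreover have "\<tau> < 1" using t bb_props(2)[of "Suc m"] by simp
    moreover have "\<tau> < 1" using t bb_props(2)[of "Suc m"] by simp
    ultimately have e1: "g \<tau> = c (Suc m) (2^(Suc (Suc m)) * (\<tau> - (1 - 1/2^(Suc m))))" unfolding g_def by simp
    have e2: "2^(Suc (Suc m)) * (\<tau> - (1 - 1/2^(Suc m))) = (0::real)" using t by (simp add: bb_def)
    have "g \<tau> = c (Suc m) 0" using e1 e2 by simp
    also have "\<dots> = c m 1" using c(2,3) by simp
    also have "1 = u m \<tau>" unfolding u_def t using bb_props(4)[of m] by (simp del: power_Suc)
    finally show ?thesis .
  qed
  have inA: "g \<tau> \<in> A" if "\<tau> \<in> {bb m..bb (Suc m)}" for m \<tau>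
    using piece[OF that] c(1)[of m] u01[OF that] unfolding lipc_def by auto
  have lipP: "dist (g s) (g t) \<le> (2 * \<delta>) * \<bar>s - t\<bar>" if "s \<in> {bb m..bb (Suc m)}" "t \<in> {bb m..bb (Suc m)}" for m s t
  proof -
    have "dist (g s) (g t) \<le> \<delta>/2^m * \<bar>u m s - u m t\<bar>"
      using c(1)[of m] u01[OF that(1)] u01[OF that(2)] unfolding piece[OF that(1)] piece[OF that(2)] lipc_def by blast
    also have "\<bar>u m s - u m t\<bar> = 2^(Suc m) * \<bar>s - t\<bar>"
      unfolding u_def by (simp add: abs_mult flip: right_diff_distrib del: power_Suc)
    also have "\<delta>/2^m * (2^(Suc m) * \<bar>s - t\<bar>) = (2 * \<delta>) * \<bar>s - t\<bar>" by simp
    finally show ?thesis .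
  qed
  have lip0: "\<forall>s\<in>{0..bb m}. \<forall>t\<in>{0..bb m}. dist (g s) (g t) \<le> (2 * \<delta>) * \<bar>s - t\<bar>" for m
  proof (induction m)
    case 0 thus ?case by (simp add: bb_def)
  next
    case (Suc m)
    have inAm: "g t \<in> A" if "t \<in> {0..bb (Suc m)}" for t
    proof -
      have t1: "t < 1" using that bb_props(2)[of "Suc m"] by simp
      have "t \<in> {bb (NN t - 1)..bb (Suc (NN t - 1))}"
        using NN_props[OF t1] that by (auto simp: bb_def)
      thus ?thesis by (rule inA)
    qed
    show ?case
    proof (intro ballI)
      fix s t assume st: "s \<in> {0..bb (Suc m)}" "t \<in> {0..bb (Suc m)}"
      show "dist (g s) (g t) \<le> (2 * \<delta>) * \<bar>s - t\<bar>"
      proof (rule lip_glue[OF ms_dist[of A], where a=0 and b="bb m" and c="bb (Suc m)"])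
        show "0 \<le> bb m" "bb m \<le> bb (Suc m)" by (rule bb_props)+
        show "\<And>t. t \<in> {0..bb (Suc m)} \<Longrightarrow> g t \<in> A" by (rule inAm)
        show "\<And>s t. s \<in> {0..bb m} \<Longrightarrow> t \<in> {0..bb m} \<Longrightarrow> dist (g s) (g t) \<le> (2 * \<delta>) * \<bar>s - t\<bar>"
          using Suc.IH by blast
        show "\<And>s t. s \<in> {bb m..bb (Suc m)} \<Longrightarrow> t \<in> {bb m..bb (Suc m)} \<Longrightarrow> dist (g s) (g t) \<le> (2 * \<delta>) * \<bar>s - t\<bar>"
          by (rule lipP)
        show "s \<in> {0..bb (Suc m)}" "t \<in> {0..bb (Suc m)}" by (rule st(1), rule st(2))
      qed
    qed
  qed
  have lt1: "dist (g s) (g t) \<le> (2 * \<delta>) * \<bar>s - t\<bar>" if "s \<in> {0..<1}" "t \<in> {0..<1}" for s t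
  proof -
    define m where "m = max (NN s) (NN t)"
    have "s < bb (NN s)" "t < bb (NN t)" using NN_props(2) that by (auto simp: bb_def)
    moreover have "bb (NN s) \<le> bb m" "bb (NN t) \<le> bb m" by (auto intro: bb_mono simp: m_def)
    ultimately have "s \<in> {0..bb m}" "t \<in> {0..bb m}" using that by auto
    thus ?thesis using lip0[of m] by blast
  qed
  have gbb: "g (bb m) = p m" for m
    using piece[of "bb m" m] bb_props[of m] c(2) by (simp add: u_def)
  have plim: "p \<longlonglongrightarrow> z"
  proof -
    have "(\<lambda>i. \<delta>/4 * inverse ((2::real)^i)) \<longlonglongrightarrow> \<delta>/4 * 0"
      by (intro tendsto_mult tendsto_const LIMSEQ_inverse_realpow_zero) auto
    hence l: "(\<lambda>i. \<delta>/4 * inverse ((2::real)^i)) \<longlonglongrightarrow> 0" by simp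
    have b: "dist (p i) z \<le> \<delta>/4 * inverse ((2::real)^i)" for i
    proof -
      have eq: "\<delta>/2^(i+2) = \<delta>/4 * inverse ((2::real)^i)" by (simp add: power_add field_simps)
      show ?thesis using less_imp_le[OF p(2)[of i]] unfolding eq .
    qed
    have "(\<lambda>i. dist (p i) z) \<longlonglongrightarrow> 0"
    proof (rule tendsto_sandwich[OF _ _ tendsto_const l])
      show "eventually (\<lambda>i. 0 \<le> dist (p i) z) sequentially" by simp
      show "eventually (\<lambda>i. dist (p i) z \<le> \<delta>/4 * inverse ((2::real)^i)) sequentially"
        by (intro always_eventually allI b)
    qed
    thus ?thesis by (rule tendsto_dist_iff[THEN iffD2])
  qed
  have to1: "dist (g s) z \<le> (2 * \<delta>) * \<bar>s - 1\<bar>" if "s \<in> {0..<1}" for s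
  proof -
    have l1: "(\<lambda>m. dist (g s) (p m)) \<longlonglongrightarrow> dist (g s) z" by (intro tendsto_dist tendsto_const plim)
    have l2: "(\<lambda>m. (2 * \<delta>) * (bb m - s)) \<longlonglongrightarrow> (2 * \<delta>) * (1 - s)" by (intro tendsto_intros bb_lim)
    have ev: "eventually (\<lambda>m. dist (g s) (p m) \<le> (2 * \<delta>) * (bb m - s)) sequentially"
      unfolding eventually_sequentially
    proof (intro exI allI impI)
      fix m assume m: "NN s \<le> m"
      have "s < bb (NN s)" using NN_props(2) that by (auto simp: bb_def)
      hence sb: "s \<le> bb m" using bb_mono[OF m] by simp
      have "dist (g s) (g (bb m)) \<le> (2 * \<delta>) * \<bar>s - bb m\<bar>"
        using lt1[of s "bb m"] that bb_props(1,2)[of m] by auto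
      thus "dist (g s) (p m) \<le> (2 * \<delta>) * (bb m - s)" using sb gbb by simp
    qed
    have "dist (g s) z \<le> (2 * \<delta>) * (1 - s)"
      by (rule tendsto_le[OF _ l2 l1 ev]) simp
    thus ?thesis using that by simp
  qed
  have g1: "g 1 = z" by (simp add: g_def)
  have "lipc (closure A) dist g (2 * \<delta>)"
    unfolding lipc_def
  proof (intro conjI ballI)
    show "0 \<le> 2 * \<delta>" using dl by simp
    fix t :: real assume t: "t \<in> {0..1}"
    show "g t \<in> closure A"
    proof (cases "t = 1")
      case True thus ?thesis using g1 z by simp
    next
      case False
      hence t1: "t < 1" using t by simp
      have "t \<in> {bb (NN t - 1)..bb (Suc (NN t - 1))}"
        using NN_props[OF t1] t by (auto simp: bb_def)
      thus ?thesis using inA closure_subset by blast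
    qed
    fix s :: real assume s: "s \<in> {0..1}"
    show "dist (g s) (g t) \<le> 2 * \<delta> * \<bar>s - t\<bar>"
    proof (cases "s = 1")
      case True note s1 = True
      show ?thesis
      proof (cases "t = 1")
        case True thus ?thesis using s1 by simp
      next
        case False
        thus ?thesis using to1[of t] t s1 g1 by (simp add: dist_commute abs_minus_commute)
      qed
    next
      case False note s1 = False
      show ?thesis
      proof (cases "t = 1")
        case True thus ?thesis using to1[of s] s s1 g1 by simp
      next
        case False thus ?thesis using lt1[of s t] s t s1 by simp
      qed
    qed
  qed
  moreover have "g 0 = p 0" using gbb[of 0] by (simp add: bb_def)
  moreover have "dist (p 0) z \<le> \<delta>" using p(2)[of 0] dl by simp
  ultimately show ?thesis using p(1) g1 by blast
qed


locale setup_inf =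
  fixes Q :: "nat \<Rightarrow> nat \<Rightarrow> real list" and j :: "(nat \<Rightarrow> real) \<Rightarrow> 'z::complete_space"
  assumes adm: "admissible Q"
    and iso: "\<forall>x\<in>Pcal Q. \<forall>y\<in>Pcal Q. dist (j x) (j y) = rho_inf Q x y"
begin

abbreviation "A \<equiv> j ` Pcal Q"

lemma emb_Pcal: "a \<in> Pk Q (Suc k) \<Longrightarrow> emb a \<in> Pcal Q"
  unfolding Pcal_def by force

lemma dist_emb:
  assumes "a \<in> Pk Q (Suc k)" "b \<in> Pk Q (Suc k)"
  shows "dist (j (emb a)) (j (emb b)) = rhok Q (Suc k) a b"
  using iso emb_Pcal[OF assms(1)] emb_Pcal[OF assms(2)] rho_inf_eq[OF adm _ assms] by simp

lemma lev_k: "lev Q (Suc k)" by (rule lev_all[OF adm])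

lemma cvA:
  assumes p: "p \<in> A" and q: "q \<in> A"
  shows "\<exists>g L. lipc A dist g L \<and> g 0 = p \<and> g 1 = q \<and> L \<le> 2 * dist p q"
proof -
  obtain x y where xy: "x \<in> Pcal Q" "y \<in> Pcal Q" "p = j x" "q = j y" using p q by auto
  obtain k a b where ab: "a \<in> Pk Q (Suc k)" "b \<in> Pk Q (Suc k)" "x = emb a" "y = emb b"
    using Pcal_common[OF adm xy(1,2)] by blast
  obtain g L where g: "lipc (Pk Q (Suc k)) (rhok Q (Suc k)) g L" "g 0 = a" "g 1 = b" "L \<le> 2 * rhok Q (Suc k) a b"
    using lev_k[of k] ab unfolding lev_def by blast
  have "lipc A dist (\<lambda>t. j (emb (g t))) L"
    unfolding lipc_def
  proof (intro conjI ballI)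
    show "0 \<le> L" using g(1) by (simp add: lipc_def)
    fix t :: real assume t: "t \<in> {0..1}"
    have gt: "g t \<in> Pk Q (Suc k)" using g(1) t by (simp add: lipc_def)
    thus "j (emb (g t)) \<in> A" using emb_Pcal by blast
    fix s :: real assume s: "s \<in> {0..1}"
    have gs: "g s \<in> Pk Q (Suc k)" using g(1) s by (simp add: lipc_def)
    have "dist (j (emb (g s))) (j (emb (g t))) = rhok Q (Suc k) (g s) (g t)" by (rule dist_emb[OF gs gt])
    also have "\<dots> \<le> L * \<bar>s - t\<bar>" using g(1) s t by (simp add: lipc_def)
    finally show "dist (j (emb (g s))) (j (emb (g t))) \<le> L * \<bar>s - t\<bar>" .
  qed
  moreover have "L \<le> 2 * dist p q" using g(4) xy ab by (simp add: dist_emb)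
  ultimately show ?thesis using g xy ab by (intro exI[of _ "\<lambda>t. j (emb (g t))"] exI[of _ L]) auto
qed

lemma quasi_closure: "quasiconvex 2 (closure A) dist"
proof (rule quasiconvex_from_lipc)
  fix z w and ep :: real assume z: "z \<in> closure A" and w: "w \<in> closure A" and ep: "0 < ep"
  define \<delta> where "\<delta> = ep / 8"
  have dl: "0 < \<delta>" using ep by (simp add: \<delta>_def)
  obtain p g1 where g1: "p \<in> A" "lipc (closure A) dist g1 (2 * \<delta>)" "g1 0 = p" "g1 1 = z" "dist p z \<le> \<delta>"
    using chain_curve[OF cvA z dl] by blast
  obtain q g3 where g3: "q \<in> A" "lipc (closure A) dist g3 (2 * \<delta>)" "g3 0 = q" "g3 1 = w" "dist q w \<le> \<delta>"
    using chain_curve[OF cvA w dl] by blast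
  obtain g2 L where g2: "lipc A dist g2 L" "g2 0 = p" "g2 1 = q" "L \<le> 2 * dist p q"
    using cvA[OF g1(1) g3(1)] by blast
  have g2': "lipc (closure A) dist g2 L" using g2(1) closure_subset by (rule lipc_subset)
  obtain g where g: "lipc (closure A) dist g (2 * \<delta> + L + 2 * \<delta>)" "g 0 = z" "g 1 = w"
    using lipc_concat3[OF ms_dist lipc_rev[OF g1(2)] g2' g3(2)] g1 g2 g3 by auto
  have t1: "dist p q \<le> dist p z + dist z q" by (rule dist_triangle)
  have t2: "dist z q \<le> dist z w + dist w q" by (rule dist_triangle)
  have "dist p q \<le> dist p z + dist z w + dist w q" using t1 t2 by linarith
  hence "2 * \<delta> + L + 2 * \<delta> \<le> 2 * dist z w + ep"
    using g2(4) g1(5) g3(5) by (simp add: \<delta>_def dist_commute)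
  thus "\<exists>g L. lipc (closure A) dist g L \<and> g 0 = z \<and> g 1 = w \<and> L \<le> 2 * dist z w + ep"
    using g by blast
qed

lemma near:
  assumes x: "x \<in> Pcal Q"
  shows "\<exists>b\<in>Pk Q (Suc k). dist (j x) (j (emb b)) \<le> (1/2)^(Suc k)"
proof -
  obtain K a where a: "a \<in> Pk Q K" "x = emb a" "1 \<le> K" using x unfolding Pcal_def by auto
  obtain K' where K': "K = Suc K'" using a(3) by (cases K) auto
  show ?thesis
  proof (cases "K \<le> Suc k")
    case True
    have "a @ replicate (Suc k - K) 0 \<in> Pk Q (Suc K' + (Suc k - K))"
      using lift_rep[OF adm, of a K'] a K' by simp
    hence "a @ replicate (Suc k - K) 0 \<in> Pk Q (Suc k)" using True K' by simp
    thus ?thesis using a by (intro bexI[of _ "a @ replicate (Suc k - K) 0"]) (auto simp: emb_rep)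
  next
    case False
    define m where "m = K - Suc k"
    have Km: "K = Suc k + m" using False by (simp add: m_def)
    obtain b where b: "b \<in> Pk Q (Suc k)" "rhok Q (Suc k + m) a (b @ replicate m 0) \<le> (1/2)^(Suc k) - (1/2)^(Suc k + m)"
      using near_level[OF adm, of a k m] a Km by auto
    have bm: "b @ replicate m 0 \<in> Pk Q (Suc (k + m))" using lift_rep[OF adm b(1), of m] by simp
    have "dist (j x) (j (emb b)) = dist (j (emb a)) (j (emb (b @ replicate m 0)))" using a by (simp add: emb_rep)
    also have "\<dots> = rhok Q (Suc (k + m)) a (b @ replicate m 0)" using a Km bm by (intro dist_emb) auto
    also have "\<dots> \<le> (1/2)^(Suc k)"
    proof -
      have z: "0 \<le> (1/2::real)^(Suc k + m)" by simp
      have b2: "rhok Q (Suc (k + m)) a (b @ replicate m 0) \<le> (1/2)^(Suc k) - (1/2)^(Suc k + m)"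
        using b(2) by (simp only: add_Suc)
      show ?thesis using z b2 by linarith
    qed
    finally show ?thesis using b(1) by blast
  qed
qed

lemma compact_closure: "compact (closure A)"
proof -
  have mc: "Met_TC.mcomplete TYPE('z)" using complete_UNIV by simp
  have tb: "Met_TC.mtotally_bounded A"
    unfolding Met_TC.mtotally_bounded_def mball_eq_ball
  proof (intro allI impI)
    fix ep :: real assume ep: "0 < ep"
    obtain k where k: "(1/2::real)^k < ep/2" using real_arch_pow_inv[of "ep/2" "1/2"] ep by auto
    have "(1/2::real)^(Suc k) \<le> (1/2)^k" by (rule power_decreasing) auto
    hence k': "(1/2::real)^(Suc k) < ep/2" using k by linarith
    interpret L: Metric_space "Pk Q (Suc k)" "rhok Q (Suc k)" using lev_k[of k] by (simp add: lev_def)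
    have "L.mtotally_bounded (Pk Q (Suc k))"
      using lev_k[of k] L.compact_space_eq_mcomplete_mtotally_bounded by (simp add: lev_def)
    hence "\<exists>F. finite F \<and> F \<subseteq> Pk Q (Suc k) \<and> Pk Q (Suc k) \<subseteq> (\<Union>x\<in>F. L.mball x (ep/2))"
      unfolding L.mtotally_bounded_def using ep by simp
    then obtain F where F: "finite F" "F \<subseteq> Pk Q (Suc k)" "Pk Q (Suc k) \<subseteq> (\<Union>x\<in>F. L.mball x (ep/2))"
      by blast
    show "\<exists>K. finite K \<and> K \<subseteq> A \<and> A \<subseteq> (\<Union>x\<in>K. ball x ep)"
    proof (intro exI[of _ "(\<lambda>b. j (emb b)) ` F"] conjI)
      show "finite ((\<lambda>b. j (emb b)) ` F)" using F(1) by simp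
      show "(\<lambda>b. j (emb b)) ` F \<subseteq> A" using F(2) emb_Pcal by auto
      show "A \<subseteq> (\<Union>x\<in>(\<lambda>b. j (emb b)) ` F. ball x ep)"
      proof
        fix p assume "p \<in> A"
        then obtain x where x: "x \<in> Pcal Q" "p = j x" by auto
        obtain b where b: "b \<in> Pk Q (Suc k)" "dist (j x) (j (emb b)) \<le> (1/2)^(Suc k)" using near[OF x(1)] by blast
        obtain b0 where b0: "b0 \<in> F" "b \<in> L.mball b0 (ep/2)" using F(3) b(1) by auto
        have "rhok Q (Suc k) b0 b < ep/2" using b0 by simp
        hence "dist (j (emb b0)) (j (emb b)) < ep/2" using F(2) b0(1) b(1) by (subst dist_emb) auto
        hence "dist (j (emb b0)) p < ep" using b(2) k' x(2) dist_triangle[of "j (emb b0)" p "j (emb b)"]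
          by (simp add: dist_commute)
        thus "p \<in> (\<Union>x\<in>(\<lambda>b. j (emb b)) ` F. ball x ep)" using b0(1) by auto
      qed
    qed
  qed
  show ?thesis using Met_TC.mtotally_bounded_eq_compact_closure_of[OF mc] tb by simp
qed

lemma Pk_ne: "Pk Q (Suc k) \<noteq> {}"
proof -
  have "[0] \<in> Pk Q (Suc 0)" by simp
  hence "[0] @ replicate k 0 \<in> Pk Q (Suc 0 + k)" by (rule lift_rep[OF adm])
  thus ?thesis by auto
qed

lemma hp_bound:
  "0 \<le> hausdorff_pompeiu (j ` emb ` Pk Q (Suc k)) (closure A) \<and>
   hausdorff_pompeiu (j ` emb ` Pk Q (Suc k)) (closure A) \<le> (1/2)^(Suc k)"
proof -
  define Ak where "Ak = j ` emb ` Pk Q (Suc k)"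
  have AkA: "Ak \<subseteq> closure A" unfolding Ak_def using emb_Pcal closure_subset by blast
  have Akne: "Ak \<noteq> {}" unfolding Ak_def using Pk_ne by auto
  have s1: "(SUP a\<in>Ak. infdist a (closure A)) = 0"
  proof -
    have "(SUP a\<in>Ak. infdist a (closure A)) = (SUP a\<in>Ak. (0::real))"
      using AkA by (intro SUP_cong) auto
    thus ?thesis using Akne by simp
  qed
  have pt: "infdist b Ak \<le> (1/2)^(Suc k)" if b: "b \<in> closure A" for b
  proof (rule field_le_epsilon)
    fix \<eta> :: real assume \<eta>: "0 < \<eta>"
    obtain p where p: "p \<in> A" "dist p b < \<eta>" using b \<eta> unfolding closure_approachable by blast
    obtain x where x: "x \<in> Pcal Q" "p = j x" using p(1) by auto
    obtain c where c: "c \<in> Pk Q (Suc k)" "dist (j x) (j (emb c)) \<le> (1/2)^(Suc k)" using near[OF x(1)] by blast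
    have "infdist p Ak \<le> (1/2)^(Suc k)" using c x unfolding Ak_def by (intro infdist_le2[of "j (emb c)"]) auto
    moreover have "infdist b Ak \<le> infdist p Ak + dist b p" by (rule infdist_triangle)
    ultimately show "infdist b Ak \<le> (1/2)^(Suc k) + \<eta>" using p(2) by (simp add: dist_commute)
  qed
  have s2: "(SUP b\<in>closure A. infdist b Ak) \<le> (1/2)^(Suc k)"
    using Akne AkA pt by (intro cSUP_least) auto
  have "hausdorff_pompeiu Ak (closure A) = max 0 (SUP b\<in>closure A. infdist b Ak)"
    unfolding hausdorff_pompeiu_def s1 ..
  moreover have "max 0 (SUP b\<in>closure A. infdist b Ak) \<le> (1/2)^(Suc k)"
    by (rule max.boundedI) (use s2 in simp_all)
  ultimately show ?thesis unfolding Ak_def[symmetric] by simp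
qed

lemma hp_lim: "(\<lambda>k. hausdorff_pompeiu (j ` emb ` Pk Q k) (closure A)) \<longlonglongrightarrow> 0"
proof (rule tendsto_sandwich[OF _ _ tendsto_const])
  show "(\<lambda>k. (1/2::real)^k) \<longlonglongrightarrow> 0" by (rule LIMSEQ_realpow_zero) auto
  show "eventually (\<lambda>k. 0 \<le> hausdorff_pompeiu (j ` emb ` Pk Q k) (closure A)) sequentially"
    unfolding eventually_sequentially
  proof (intro exI[of _ 1] allI impI)
    fix k :: nat assume "1 \<le> k"
    then obtain k' where "k = Suc k'" by (cases k) auto
    thus "0 \<le> hausdorff_pompeiu (j ` emb ` Pk Q k) (closure A)" using hp_bound[of k'] by simp
  qed
  show "eventually (\<lambda>k. hausdorff_pompeiu (j ` emb ` Pk Q k) (closure A) \<le> (1/2)^k) sequentially"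
    unfolding eventually_sequentially
  proof (intro exI[of _ 1] allI impI)
    fix k :: nat assume "1 \<le> k"
    then obtain k' where "k = Suc k'" by (cases k) auto
    thus "hausdorff_pompeiu (j ` emb ` Pk Q k) (closure A) \<le> (1/2)^k" using hp_bound[of k'] by simp
  qed
qed

lemma levels:
  "\<forall>k\<ge>1. Metric_space (Pk Q k) (rhok Q k)
              \<and> compact_space (Metric_space.mtopology (Pk Q k) (rhok Q k))
              \<and> quasiconvex 2 (Pk Q k) (rhok Q k)"
proof (intro allI impI)
  fix k :: nat assume "1 \<le> k"
  then obtain k' where k: "k = Suc k'" by (cases k) auto
  have L: "lev Q k" using lev_k[of k'] k by simp
  have "quasiconvex 2 (Pk Q k) (rhok Q k)"
  proof (rule quasiconvex_from_lipc)
    fix x y and ep :: real assume xy: "x \<in> Pk Q k" "y \<in> Pk Q k" and ep: "0 < ep"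
    obtain g L where g: "lipc (Pk Q k) (rhok Q k) g L" "g 0 = x" "g 1 = y" "L \<le> 2 * rhok Q k x y"
      using L xy unfolding lev_def by blast
    have "L \<le> 2 * rhok Q k x y + ep" using g(4) ep by linarith
    thus "\<exists>g L. lipc (Pk Q k) (rhok Q k) g L \<and> g 0 = x \<and> g 1 = y \<and> L \<le> 2 * rhok Q k x y + ep"
      using g by blast
  qed
  thus "Metric_space (Pk Q k) (rhok Q k) \<and> compact_space (Metric_space.mtopology (Pk Q k) (rhok Q k))
              \<and> quasiconvex 2 (Pk Q k) (rhok Q k)" using L unfolding lev_def by blast
qed

end


theorem proposition4p9:
  fixes Q :: "nat \<Rightarrow> nat \<Rightarrow> real list"
    and j :: "(nat \<Rightarrow> real) \<Rightarrow> 'z::complete_space"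
  assumes adm: "admissible Q"
    and iso: "\<forall>x\<in>Pcal Q. \<forall>y\<in>Pcal Q. dist (j x) (j y) = rho_inf Q x y"
  shows "(\<forall>k\<ge>1. Metric_space (Pk Q k) (rhok Q k)
              \<and> compact_space (Metric_space.mtopology (Pk Q k) (rhok Q k))
              \<and> quasiconvex 2 (Pk Q k) (rhok Q k))
         \<and> compact (closure (j ` Pcal Q))
         \<and> quasiconvex 2 (closure (j ` Pcal Q)) dist
         \<and> (\<lambda>k. hausdorff_pompeiu (j ` emb ` Pk Q k) (closure (j ` Pcal Q))) \<longlonglongrightarrow> 0"
proof -
  interpret setup_inf Q j using adm iso by unfold_locales
  show ?thesis using levels compact_closure quasi_closure hp_lim by blast
qed

end
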